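(* Let $N\ge3$ and let both layers be the unweighted complete graph on $N$ nodes without self-loops. Consider the process described in the context started from the state $\boldsymbol{\xi}$ in which individual $1$ is the only cooperator in layer 1 and also the only mutant in layer 2. Let $\rho^{[1]}(\boldsymbol{\xi})$ be the probability that layer 1 eventually consists only of cooperators, and let $c>0$. Then $\left.\frac{\mathrm{d}}{\mathrm{d}\delta}\rho^{[1]}(\boldsymbol{\xi})\right|_{\delta=0}>0$ (spite is favored) if and only if $$\frac bc<-(N-1)+\frac{r-1}{c}\cdot\frac{2(N-1)^2}{N(2N-3)} .$$
   Context: $N$ individuals; in both layers $L\in\{1,2\}$, $w^{[L]}_{ij}=1$ for $i\ne j$ and $w^{[L]}_{ii}=0$. States $(x^{[1]},x^{[2]})\in\{0,1\}^N\times\{0,1\}^N$: $x^{[1]}_i=1$ means cooperator (else defector) in layer 1, $x^{[2]}_i=1$ means mutant (else resident) in layer 2. Payoff: $u_i=-c\,x^{[1]}_i+\frac{b}{N-1}\sum_{j\ne i}x^{[1]}_j+(r-1)x^{[2]}_i+1$ with $r\ge0$; fecundity $F_i=1+\delta u_i$, $\delta\ge0$. Each time step, simultaneously and independently in each layer $L$: choose $i$ uniformly at random, choose $j\neq i$ with probability $F_j/\sum_{k\ne i}F_k$, and set $x^{[L]}_i\leftarrow x^{[L]}_j$ (death-Birth updating in both layers). *)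

theory Defs
  imports "HOL-Analysis.Analysis"
begin

text \<open>Individuals are indexed 0,...,N-1 (individual 1 of the paper is index 0).
A state is a pair (x, y) of boolean vectors (layer 1: cooperator = True,
layer 2: mutant = True); entries at indices >= N are False.\<close>

type_synonym state = "(nat \<Rightarrow> bool) \<times> (nat \<Rightarrow> bool)"

definition states :: "nat \<Rightarrow> state set" where
  "states N = {(x, y). \<forall>i. N \<le> i \<longrightarrow> \<not> x i \<and> \<not> y i}"

definition payoff :: "nat \<Rightarrow> real \<Rightarrow> real \<Rightarrow> real \<Rightarrow> state \<Rightarrow> nat \<Rightarrow> real" where
  "payoff N b c r s i =
     - c * of_bool (fst s i)
     + b / (real N - 1) * (\<Sum>j\<in>{..<N} - {i}. of_bool (fst s j))
     + (r - 1) * of_bool (snd s i) + 1"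

definition fecundity :: "nat \<Rightarrow> real \<Rightarrow> real \<Rightarrow> real \<Rightarrow> real \<Rightarrow> state \<Rightarrow> nat \<Rightarrow> real" where
  "fecundity N b c r \<delta> s i = 1 + \<delta> * payoff N b c r s i"

text \<open>Death-Birth update in one layer: probability that the layer vector z becomes z',
given fecundities F: choose i uniformly, choose j ~= i proportional to F j, copy.\<close>
definition layer_prob :: "nat \<Rightarrow> (nat \<Rightarrow> real) \<Rightarrow> (nat \<Rightarrow> bool) \<Rightarrow> (nat \<Rightarrow> bool) \<Rightarrow> real" where
  "layer_prob N F z z' =
     (\<Sum>i<N. \<Sum>j\<in>{..<N} - {i}.
        (1 / real N) * (F j / (\<Sum>k\<in>{..<N} - {i}. F k)) * of_bool (z' = z(i := z j)))"

definition trans_prob :: "nat \<Rightarrow> real \<Rightarrow> real \<Rightarrow> real \<Rightarrow> real \<Rightarrow> state \<Rightarrow> state \<Rightarrow> real" where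
  "trans_prob N b c r \<delta> s s' =
     layer_prob N (fecundity N b c r \<delta> s) (fst s) (fst s')
   * layer_prob N (fecundity N b c r \<delta> s) (snd s) (snd s')"

fun all_coop_prob :: "nat \<Rightarrow> real \<Rightarrow> real \<Rightarrow> real \<Rightarrow> real \<Rightarrow> nat \<Rightarrow> state \<Rightarrow> real" where
  "all_coop_prob N b c r \<delta> 0 s = of_bool (\<forall>i<N. fst s i)"
| "all_coop_prob N b c r \<delta> (Suc t) s =
     (\<Sum>s'\<in>states N. trans_prob N b c r \<delta> s s' * all_coop_prob N b c r \<delta> t s')"

text \<open>Since the all-cooperator set is closed for layer 1, the t-step probability is
nondecreasing in t and its limit is the probability of eventual fixation of cooperators.\<close>
definition rho1 :: "nat \<Rightarrow> real \<Rightarrow> real \<Rightarrow> real \<Rightarrow> real \<Rightarrow> state \<Rightarrow> real" where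
  "rho1 N b c r \<delta> s = lim (\<lambda>t. all_coop_prob N b c r \<delta> t s)"

definition xi :: state where
  "xi = ((\<lambda>i. i = 0), (\<lambda>i. i = 0))"

end

theory Submission
  imports Defs
begin


fun iterP :: "('s \<Rightarrow> 's \<Rightarrow> real) \<Rightarrow> 's set \<Rightarrow> nat \<Rightarrow> ('s \<Rightarrow> real) \<Rightarrow> 's \<Rightarrow> real" where
  "iterP P S 0 h s = h s"
| "iterP P S (Suc t) h s = (\<Sum>s'\<in>S. P s s' * iterP P S t h s')"

lemma iterP_shift:
  "iterP P S (Suc t) h s = iterP P S t (\<lambda>s. \<Sum>s'\<in>S. P s s' * h s') s"
proof (induction t arbitrary: s)
  case 0 then show ?case by simp
next
  case (Suc t)
  have "iterP P S (Suc (Suc t)) h s = (\<Sum>s'\<in>S. P s s' * iterP P S (Suc t) h s')" by simp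
  also have "\<dots> = (\<Sum>s'\<in>S. P s s' * iterP P S t (\<lambda>s. \<Sum>s'\<in>S. P s s' * h s') s')"
    using Suc by simp
  finally show ?case by simp
qed

lemma iterP_cong:
  assumes "\<And>s. s \<in> S \<Longrightarrow> h1 s = h2 s" "s \<in> S"
  shows "iterP P S t h1 s = iterP P S t h2 s"
  using assms(2) by (induction t arbitrary: s) (auto simp: assms(1))

lemma iterP_add:
  "iterP P S t (\<lambda>s. h1 s + h2 s) s = iterP P S t h1 s + iterP P S t h2 s"
  by (induction t arbitrary: s) (auto simp: distrib_left sum.distrib)

lemma iterP_cmult:
  "iterP P S t (\<lambda>s. k * h s) s = k * iterP P S t h s"
  by (induction t arbitrary: s) (auto simp: sum_distrib_left algebra_simps)

lemma iterP_diff: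
  "iterP P S t (\<lambda>s. h1 s - h2 s) s = iterP P S t h1 s - iterP P S t h2 s"
  by (induction t arbitrary: s) (auto simp: right_diff_distrib sum_subtractf)

lemma iterP_abs_bound:
  assumes nonneg: "\<And>s s'. s \<in> S \<Longrightarrow> s' \<in> S \<Longrightarrow> P s s' \<ge> 0"
  assumes "\<And>s. s \<in> S \<Longrightarrow> \<bar>h s\<bar> \<le> g s" "s \<in> S"
  shows "\<bar>iterP P S t h s\<bar> \<le> iterP P S t g s"
  using assms(3)
proof (induction t arbitrary: s)
  case 0 then show ?case using assms(2) by simp
next
  case (Suc t)
  have "\<bar>iterP P S (Suc t) h s\<bar> \<le> (\<Sum>s'\<in>S. \<bar>P s s' * iterP P S t h s'\<bar>)"
    by (simp add: sum_abs)
  also have "\<dots> \<le> (\<Sum>s'\<in>S. P s s' * iterP P S t g s')"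
    apply (rule sum_mono)
    using Suc nonneg by (simp add: abs_mult mult_left_mono)
  finally show ?case by simp
qed

lemma iterP_mono:
  assumes nonneg: "\<And>s s'. s \<in> S \<Longrightarrow> s' \<in> S \<Longrightarrow> P s s' \<ge> 0"
  assumes "\<And>s. s \<in> S \<Longrightarrow> h s \<le> g s" "s \<in> S"
  shows "iterP P S t h s \<le> iterP P S t g s"
  using assms(3)
proof (induction t arbitrary: s)
  case 0 then show ?case using assms(2) by simp
next
  case (Suc t)
  show ?case
    apply simp
    apply (rule sum_mono)
    using Suc nonneg by (simp add: mult_left_mono)
qed

lemma iterP_geom:
  assumes nonneg: "\<And>s s'. s \<in> S \<Longrightarrow> s' \<in> S \<Longrightarrow> P s s' \<ge> 0"
  assumes contr: "\<And>s. s \<in> S \<Longrightarrow> (\<Sum>s'\<in>S. P s s' * V s') \<le> \<theta> * V s" and th: "\<theta> \<ge> 0"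
  assumes "s \<in> S"
  shows "iterP P S t V s \<le> \<theta> ^ t * V s"
  using assms(4)
proof (induction t arbitrary: s)
  case 0 then show ?case by simp
next
  case (Suc t)
  have "iterP P S (Suc t) V s = iterP P S t (\<lambda>s. \<Sum>s'\<in>S. P s s' * V s') s"
    by (rule iterP_shift)
  also have "\<dots> \<le> iterP P S t (\<lambda>s. \<theta> * V s) s"
    by (rule iterP_mono[OF nonneg contr Suc.prems])
  also have "\<dots> = \<theta> * iterP P S t V s" by (rule iterP_cmult)
  also have "\<dots> \<le> \<theta> * (\<theta> ^ t * V s)" using Suc th by (simp add: mult_left_mono)
  finally show ?case by simp
qed

lemma iterP_eigen:
  assumes eig: "\<And>s. s \<in> S \<Longrightarrow> (\<Sum>s'\<in>S. P s s' * V s') = \<theta> * V s"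
  assumes "s \<in> S"
  shows "iterP P S t V s = \<theta> ^ t * V s"
  using assms(2)
proof (induction t arbitrary: s)
  case 0 then show ?case by simp
next
  case (Suc t)
  have "iterP P S (Suc t) V s = iterP P S t (\<lambda>s. \<Sum>s'\<in>S. P s s' * V s') s"
    by (rule iterP_shift)
  also have "\<dots> = iterP P S t (\<lambda>s. \<theta> * V s) s"
    by (rule iterP_cong[OF eig Suc.prems])
  also have "\<dots> = \<theta> * iterP P S t V s" by (rule iterP_cmult)
  finally show ?case using Suc by simp
qed

lemma iterP_tendsto:
  assumes "\<And>s s'. ((\<lambda>d. P d s s') \<longlongrightarrow> P0 s s') F"
  assumes "\<And>s. ((\<lambda>d. h d s) \<longlongrightarrow> h0 s) F"
  shows "((\<lambda>d. iterP (P d) S t (h d) s) \<longlongrightarrow> iterP P0 S t h0 s) F"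
proof (induction t arbitrary: s)
  case 0 then show ?case using assms(2) by simp
next
  case (Suc t)
  show ?case
    by (simp, intro tendsto_sum tendsto_mult assms(1) Suc)
qed



declare sum_of_bool_eq[simp del] sum_of_bool_mult_eq[simp del] sum_mult_of_bool_eq[simp del]

definition Sx :: "nat \<Rightarrow> (nat \<Rightarrow> bool) set" where
  "Sx N = {z. \<forall>i. N \<le> i \<longrightarrow> \<not> z i}"

definition nn :: "nat \<Rightarrow> (nat \<Rightarrow> bool) \<Rightarrow> real" where
  "nn N z = (\<Sum>i<N. of_bool (z i))"

definition E1 :: "nat \<Rightarrow> (nat \<Rightarrow> real) \<Rightarrow> (nat \<Rightarrow> bool) \<Rightarrow> ((nat \<Rightarrow> bool) \<Rightarrow> real) \<Rightarrow> real" where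
  "E1 N F z h = (\<Sum>i<N. \<Sum>j\<in>{..<N} - {i}.
        (1 / real N) * (F j / (\<Sum>k\<in>{..<N} - {i}. F k)) * h (z(i := z j)))"

lemma Sx_image: "Sx N = (\<lambda>A i. i \<in> A) ` Pow {..<N}"
proof
  show "Sx N \<subseteq> (\<lambda>A i. i \<in> A) ` Pow {..<N}"
  proof
    fix z assume "z \<in> Sx N"
    then have "{i. z i} \<in> Pow {..<N}" by (auto simp: Sx_def not_le[symmetric])
    moreover have "z = (\<lambda>i. i \<in> {i. z i})" by auto
    ultimately show "z \<in> (\<lambda>A i. i \<in> A) ` Pow {..<N}" by blast
  qed
  show "(\<lambda>A i. i \<in> A) ` Pow {..<N} \<subseteq> Sx N" by (auto simp: Sx_def)
qed

lemma finite_Sx: "finite (Sx N)"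
  by (simp add: Sx_image)

lemma states_eq: "states N = Sx N \<times> Sx N"
  by (auto simp: states_def Sx_def)

lemma finite_states: "finite (states N)"
  by (simp add: states_eq finite_Sx)

lemma upd_in_Sx: "z \<in> Sx N \<Longrightarrow> i < N \<Longrightarrow> z(i := v) \<in> Sx N"
  by (auto simp: Sx_def)

lemma sum_indicator_eq:
  assumes "finite S"
  shows "(\<Sum>z'\<in>S. a * of_bool (z' = w) * h z') = (if w \<in> S then a * h w else (0::real))"
proof -
  have "(\<Sum>z'\<in>S. a * of_bool (z' = w) * h z') = (\<Sum>z'\<in>S. if z' = w then a * h w else 0)"
    by (rule sum.cong) auto
  also have "\<dots> = (if w \<in> S then a * h w else 0)"
    using assms by (simp add: sum.delta')
  finally show ?thesis .
qed

lemma layer_sum: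
  assumes z: "z \<in> Sx N"
  shows "(\<Sum>z'\<in>Sx N. layer_prob N F z z' * h z') = E1 N F z h"
proof -
  have "(\<Sum>z'\<in>Sx N. layer_prob N F z z' * h z') =
     (\<Sum>z'\<in>Sx N. \<Sum>i<N. \<Sum>j\<in>{..<N} - {i}.
        (1 / real N) * (F j / (\<Sum>k\<in>{..<N} - {i}. F k)) * of_bool (z' = z(i := z j)) * h z')"
    by (simp add: layer_prob_def sum_distrib_right)
  also have "\<dots> = (\<Sum>i<N. \<Sum>j\<in>{..<N} - {i}. \<Sum>z'\<in>Sx N.
        (1 / real N) * (F j / (\<Sum>k\<in>{..<N} - {i}. F k)) * of_bool (z' = z(i := z j)) * h z')"
    apply (subst sum.swap) apply (rule sum.cong, simp) apply (subst sum.swap) by simp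
  also have "\<dots> = E1 N F z h"
    unfolding E1_def
    apply (rule sum.cong, simp)
    apply (rule sum.cong, simp)
    apply (subst sum_indicator_eq[OF finite_Sx])
    using upd_in_Sx[OF z] by auto
  finally show ?thesis .
qed

lemma trans_sum:
  assumes s: "s \<in> states N"
  shows "(\<Sum>s'\<in>states N. trans_prob N b c r \<delta> s s' * (g (fst s') * h (snd s'))) =
    E1 N (fecundity N b c r \<delta> s) (fst s) g * E1 N (fecundity N b c r \<delta> s) (snd s) h"
proof -
  let ?F = "fecundity N b c r \<delta> s"
  have s1: "fst s \<in> Sx N" and s2: "snd s \<in> Sx N" using s by (auto simp: states_eq)
  have "(\<Sum>s'\<in>states N. trans_prob N b c r \<delta> s s' * (g (fst s') * h (snd s'))) =
     (\<Sum>(x',y')\<in>Sx N \<times> Sx N. (layer_prob N ?F (fst s) x' * g x') * (layer_prob N ?F (snd s) y' * h y'))"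
    unfolding states_eq trans_prob_def
    by (rule sum.cong) (auto simp: algebra_simps)
  also have "\<dots> = (\<Sum>x'\<in>Sx N. \<Sum>y'\<in>Sx N. (layer_prob N ?F (fst s) x' * g x') * (layer_prob N ?F (snd s) y' * h y'))"
    by (rule sum.cartesian_product[symmetric])
  also have "\<dots> = (\<Sum>x'\<in>Sx N. layer_prob N ?F (fst s) x' * g x') * (\<Sum>y'\<in>Sx N. layer_prob N ?F (snd s) y' * h y')"
    by (simp add: sum_product)
  also have "\<dots> = E1 N ?F (fst s) g * E1 N ?F (snd s) h"
    by (simp add: layer_sum[OF s1] layer_sum[OF s2])
  finally show ?thesis .
qed

lemma sum_minus_i:
  fixes g :: "nat \<Rightarrow> real"
  assumes "i < N"
  shows "(\<Sum>j\<in>{..<N} - {i}. g j) = (\<Sum>j<N. g j) - g i"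
  using assms by (simp add: sum_diff1)

lemma E1_one:
  assumes "\<And>i. i < N \<Longrightarrow> (\<Sum>k\<in>{..<N} - {i}. F k) \<noteq> 0" "N \<ge> 1"
  shows "E1 N F z (\<lambda>_. 1) = 1"
proof -
  have inner: "(\<Sum>j\<in>{..<N} - {i}. (1 / real N) * (F j / (\<Sum>k\<in>{..<N} - {i}. F k)) * 1) = 1 / real N"
    if "i < N" for i
  proof -
    let ?D = "(\<Sum>k\<in>{..<N} - {i}. F k)"
    have "(\<Sum>j\<in>{..<N} - {i}. (1 / real N) * (F j / ?D) * 1) = (\<Sum>j\<in>{..<N} - {i}. F j * (1 / (real N * ?D)))"
      by (rule sum.cong) auto
    also have "\<dots> = ?D * (1 / (real N * ?D))" by (rule sum_distrib_right[symmetric])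
    also have "\<dots> = 1 / real N" using assms(1)[OF that] that by (simp add: field_simps)
    finally show ?thesis .
  qed
  have "E1 N F z (\<lambda>_. 1) = (\<Sum>i<N. 1 / real N)"
    unfolding E1_def by (rule sum.cong[OF refl], rule inner, simp)
  also have "\<dots> = 1" using assms(2) by simp
  finally show ?thesis .
qed

lemma nn_upd:
  assumes "i < N"
  shows "nn N (z(i := v)) = nn N z - of_bool (z i) + of_bool v"
proof -
  have i: "i \<in> {..<N}" using assms by simp
  have "nn N (z(i := v)) = of_bool v + (\<Sum>k\<in>{..<N} - {i}. of_bool ((z(i := v)) k))"
    unfolding nn_def by (subst sum.remove[OF finite_lessThan i]) simp
  also have "(\<Sum>k\<in>{..<N} - {i}. of_bool ((z(i := v)) k)) = (\<Sum>k\<in>{..<N} - {i}. (of_bool (z k)::real))"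
    by (rule sum.cong) auto
  also have "nn N z = of_bool (z i) + (\<Sum>k\<in>{..<N} - {i}. (of_bool (z k)::real))"
    unfolding nn_def by (subst sum.remove[OF finite_lessThan i]) simp
  ultimately show ?thesis by linarith
qed

lemma pair0:
  fixes x :: "nat \<Rightarrow> bool"
  shows "(\<Sum>i<N. \<Sum>j\<in>{..<N} - {i}. (of_bool (x j) - of_bool (x i) :: real)) = 0"
proof -
  have "(\<Sum>i<N. \<Sum>j\<in>{..<N} - {i}. (of_bool (x j) - of_bool (x i) :: real))
     = (\<Sum>i<N. nn N x - real N * of_bool (x i))"
    apply (rule sum.cong, simp)
    apply (subst sum_minus_i, simp)
    by (simp add: sum_subtractf nn_def)
  also have "\<dots> = 0" by (simp add: sum_subtractf nn_def sum_distrib_left)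
  finally show ?thesis .
qed

lemma pair2:
  fixes x :: "nat \<Rightarrow> bool"
  shows "(\<Sum>i<N. \<Sum>j\<in>{..<N} - {i}. (of_bool (x j) - of_bool (x i) :: real)^2) = 2 * nn N x * (real N - nn N x)"
proof -
  have sq: "(of_bool (x j) - of_bool (x i) :: real)^2 = of_bool (x j) + of_bool (x i) - 2 * of_bool (x i) * of_bool (x j)" for i j
    by (cases "x i"; cases "x j") (auto simp: power2_eq_square)
  have "(\<Sum>i<N. \<Sum>j\<in>{..<N} - {i}. (of_bool (x j) - of_bool (x i) :: real)^2)
     = (\<Sum>i<N. nn N x + real N * of_bool (x i) - 2 * of_bool (x i) * nn N x)"
    apply (rule sum.cong, simp)
    apply (subst sum_minus_i, simp)
    by (simp add: sq sum.distrib sum_subtractf nn_def sum_distrib_left)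
  also have "\<dots> = real N * nn N x + real N * nn N x - 2 * nn N x * nn N x"
    by (simp add: sum.distrib sum_subtractf sum_distrib_left sum_distrib_right nn_def mult.assoc mult.commute mult.left_commute)
  also have "\<dots> = 2 * nn N x * (real N - nn N x)" by (simp add: algebra_simps)
  finally show ?thesis .
qed



lemma dsum_lin:
  fixes A d e :: "nat \<Rightarrow> nat \<Rightarrow> real"
  shows "(\<Sum>i\<in>I. \<Sum>j\<in>J i. A i j * (K * d i j - e i j)) = K * (\<Sum>i\<in>I. \<Sum>j\<in>J i. A i j * d i j) - (\<Sum>i\<in>I. \<Sum>j\<in>J i. A i j * e i j)"
  by (simp add: sum_subtractf sum_distrib_left right_diff_distrib mult.left_commute)

lemma E1_decomp:
  assumes D: "\<And>i. i < N \<Longrightarrow> (\<Sum>k\<in>{..<N} - {i}. F k) \<noteq> 0" and N: "N \<ge> 1"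
  assumes h: "\<And>i j. i < N \<Longrightarrow> j < N \<Longrightarrow> j \<noteq> i \<Longrightarrow> h (z(i := z j)) = \<alpha> + \<beta> i j"
  shows "E1 N F z h = \<alpha> + (\<Sum>i<N. \<Sum>j\<in>{..<N} - {i}. (1 / real N) * (F j / (\<Sum>k\<in>{..<N} - {i}. F k)) * \<beta> i j)"
proof -
  let ?A = "\<lambda>i j. (1 / real N) * (F j / (\<Sum>k\<in>{..<N} - {i}. F k))"
  have "E1 N F z h = (\<Sum>i<N. \<Sum>j\<in>{..<N} - {i}. ?A i j * \<alpha> + ?A i j * \<beta> i j)"
    unfolding E1_def
    by (rule sum.cong[OF refl], rule sum.cong[OF refl]) (auto simp: h distrib_left)
  also have "\<dots> = \<alpha> * (\<Sum>i<N. \<Sum>j\<in>{..<N} - {i}. ?A i j * 1) + (\<Sum>i<N. \<Sum>j\<in>{..<N} - {i}. ?A i j * \<beta> i j)"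
    by (simp add: sum.distrib sum_distrib_left mult.commute mult.left_commute)
  also have "(\<Sum>i<N. \<Sum>j\<in>{..<N} - {i}. ?A i j * 1) = E1 N F z (\<lambda>_. 1)"
    unfolding E1_def by simp
  also have "\<dots> = 1" by (rule E1_one[OF D N])
  finally show ?thesis by simp
qed

definition VV :: "nat \<Rightarrow> (nat \<Rightarrow> bool) \<Rightarrow> real" where
  "VV N z = nn N z * (real N - nn N z)"

lemma E1_nn:
  assumes D: "\<And>i. i < N \<Longrightarrow> (\<Sum>k\<in>{..<N} - {i}. F k) \<noteq> 0" and N: "N \<ge> 1"
  shows "E1 N F z (nn N) = nn N z + (\<Sum>i<N. \<Sum>j\<in>{..<N} - {i}. (1 / real N) * (F j / (\<Sum>k\<in>{..<N} - {i}. F k)) * (of_bool (z j) - of_bool (z i)))"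
proof (rule E1_decomp[OF D N])
  fix i j assume "i < N" "j < N" "j \<noteq> i"
  then show "nn N (z(i := z j)) = nn N z + (of_bool (z j) - of_bool (z i))"
    by (subst nn_upd) simp_all
qed

lemma E1_VV:
  assumes D: "\<And>i. i < N \<Longrightarrow> (\<Sum>k\<in>{..<N} - {i}. F k) \<noteq> 0" and N: "N \<ge> 1"
  shows "E1 N F z (VV N) = VV N z
     + (real N - 2 * nn N z) * (\<Sum>i<N. \<Sum>j\<in>{..<N} - {i}. (1 / real N) * (F j / (\<Sum>k\<in>{..<N} - {i}. F k)) * (of_bool (z j) - of_bool (z i)))
     - (\<Sum>i<N. \<Sum>j\<in>{..<N} - {i}. (1 / real N) * (F j / (\<Sum>k\<in>{..<N} - {i}. F k)) * (of_bool (z j) - of_bool (z i))^2)"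
proof -
  let ?A = "\<lambda>i j. (1 / real N) * (F j / (\<Sum>k\<in>{..<N} - {i}. F k))"
  let ?d = "\<lambda>i j. (of_bool (z j) - of_bool (z i) :: real)"
  have "E1 N F z (VV N) = VV N z + (\<Sum>i<N. \<Sum>j\<in>{..<N} - {i}. ?A i j * ((real N - 2 * nn N z) * ?d i j - (?d i j)^2))"
  proof (rule E1_decomp[OF D N])
    fix i j assume "i < N" "j < N" "j \<noteq> i"
    then show "VV N (z(i := z j)) = VV N z + ((real N - 2 * nn N z) * ?d i j - (?d i j)^2)"
    proof -
      have e: "nn N (z(i := z j)) = nn N z + ?d i j" using \<open>i < N\<close> by (subst nn_upd) simp_all
      show ?thesis unfolding VV_def e by (simp add: algebra_simps power2_eq_square)
    qed
  qed
  also have "(\<Sum>i<N. \<Sum>j\<in>{..<N} - {i}. ?A i j * ((real N - 2 * nn N z) * ?d i j - (?d i j)^2))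
     = (real N - 2 * nn N z) * (\<Sum>i<N. \<Sum>j\<in>{..<N} - {i}. ?A i j * ?d i j) - (\<Sum>i<N. \<Sum>j\<in>{..<N} - {i}. ?A i j * (?d i j)^2)"
    by (rule dsum_lin)
  finally show ?thesis by simp
qed



definition UU :: "nat \<Rightarrow> real \<Rightarrow> real \<Rightarrow> real \<Rightarrow> state \<Rightarrow> nat \<Rightarrow> real" where
  "UU N b c r s i = (\<Sum>k\<in>{..<N} - {i}. payoff N b c r s k)"

definition ee :: "nat \<Rightarrow> real \<Rightarrow> real \<Rightarrow> real \<Rightarrow> real \<Rightarrow> state \<Rightarrow> nat \<Rightarrow> nat \<Rightarrow> real" where
  "ee N b c r \<delta> s i j = ((real N - 1) * payoff N b c r s j - UU N b c r s i)
      / ((real N - 1) * (real N - 1 + \<delta> * UU N b c r s i))"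

definition QQ :: "nat \<Rightarrow> real \<Rightarrow> real \<Rightarrow> real \<Rightarrow> real \<Rightarrow> state \<Rightarrow> real" where
  "QQ N b c r \<delta> s = (\<Sum>i<N. \<Sum>j\<in>{..<N} - {i}.
      (1 / real N) * ee N b c r \<delta> s i j * (of_bool (fst s j) - of_bool (fst s i)))"

definition MM :: "real \<Rightarrow> real \<Rightarrow> real \<Rightarrow> real" where
  "MM b c r = \<bar>b\<bar> + \<bar>c\<bar> + \<bar>r - 1\<bar> + 1"

definition dd0 :: "nat \<Rightarrow> real \<Rightarrow> real \<Rightarrow> real \<Rightarrow> real" where
  "dd0 N b c r = 1 / (16 * MM b c r * real N)"

lemma MM_ge1: "MM b c r \<ge> 1"
  unfolding MM_def by simp

lemma card_minus_i: "i < N \<Longrightarrow> real (card ({..<N} - {i})) = real N - 1"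
  by (simp add: of_nat_diff)

lemma fec_sum:
  assumes "i < N"
  shows "(\<Sum>k\<in>{..<N} - {i}. fecundity N b c r \<delta> s k) = real N - 1 + \<delta> * UU N b c r s i"
proof -
  have "(\<Sum>k\<in>{..<N} - {i}. fecundity N b c r \<delta> s k) = (\<Sum>k\<in>{..<N} - {i}. 1) + \<delta> * UU N b c r s i"
    unfolding fecundity_def UU_def by (simp add: sum.distrib sum_distrib_left)
  also have "(\<Sum>k\<in>{..<N} - {i}. (1::real)) = real N - 1"
    using card_minus_i[OF assms] by simp
  finally show ?thesis .
qed

lemma sum_bool_le:
  assumes "i < N"
  shows "0 \<le> (\<Sum>j\<in>{..<N} - {i}. (of_bool (x j)::real)) \<and> (\<Sum>j\<in>{..<N} - {i}. (of_bool (x j)::real)) \<le> real N - 1"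
proof
  show "0 \<le> (\<Sum>j\<in>{..<N} - {i}. (of_bool (x j)::real))" by (rule sum_nonneg) simp
  have "(\<Sum>j\<in>{..<N} - {i}. (of_bool (x j)::real)) \<le> (\<Sum>j\<in>{..<N} - {i}. 1)"
    by (rule sum_mono) simp
  also have "\<dots> = real N - 1" using card_minus_i[OF assms] by simp
  finally show "(\<Sum>j\<in>{..<N} - {i}. (of_bool (x j)::real)) \<le> real N - 1" .
qed

lemma payoff_bound:
  assumes "k < N" "N \<ge> 2"
  shows "\<bar>payoff N b c r s k\<bar> \<le> MM b c r"
proof -
  let ?S = "(\<Sum>j\<in>{..<N} - {k}. (of_bool (fst s j)::real))"
  have S: "0 \<le> ?S" "?S \<le> real N - 1" using sum_bool_le[OF assms(1)] by auto
  have N1: "real N - 1 > 0" using assms(2) by simp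
  have "\<bar>b / (real N - 1) * ?S\<bar> = \<bar>b\<bar> * (?S / (real N - 1))"
    using S N1 by (simp add: abs_mult)
  also have "\<dots> \<le> \<bar>b\<bar> * 1"
    apply (rule mult_left_mono) using S N1 by auto
  finally have bS: "\<bar>b / (real N - 1) * ?S\<bar> \<le> \<bar>b\<bar>" by simp
  have cS: "\<bar>- c * of_bool (fst s k)\<bar> \<le> \<bar>c\<bar>" by (simp add: abs_mult)
  have rS: "\<bar>(r - 1) * of_bool (snd s k)\<bar> \<le> \<bar>r - 1\<bar>" by (simp add: abs_mult)
  show ?thesis unfolding payoff_def MM_def using bS cS rS by linarith
qed

lemma UU_bound:
  assumes "i < N" "N \<ge> 2"
  shows "\<bar>UU N b c r s i\<bar> \<le> (real N - 1) * MM b c r"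
proof -
  have "\<bar>UU N b c r s i\<bar> \<le> (\<Sum>k\<in>{..<N} - {i}. \<bar>payoff N b c r s k\<bar>)"
    unfolding UU_def by (rule sum_abs)
  also have "\<dots> \<le> (\<Sum>k\<in>{..<N} - {i}. MM b c r)"
    by (rule sum_mono) (use payoff_bound assms in auto)
  also have "\<dots> = (real N - 1) * MM b c r" using card_minus_i[OF assms(1)] by simp
  finally show ?thesis .
qed

lemma w_aux:
  assumes "(m::real) > 0" "m + d * U > 0"
  shows "(1 + d * p) / (m + d * U) = 1 / m + d * ((m * p - U) / (m * (m + d * U)))"
proof -
  define Dn where "Dn = m + d * U"
  have Dn: "Dn > 0" using assms Dn_def by simp
  have "1 / m + d * ((m * p - U) / (m * Dn)) = (Dn + d * (m * p - U)) / (m * Dn)"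
    using assms(1) Dn by (simp add: field_simps)
  also have "Dn + d * (m * p - U) = m * (1 + d * p)" unfolding Dn_def by (simp add: algebra_simps)
  also have "m * (1 + d * p) / (m * Dn) = (1 + d * p) / Dn" using assms(1) by simp
  finally show ?thesis unfolding Dn_def by simp
qed

lemma frac_aux: "(m::real) > 0 \<Longrightarrow> 2 * m * M / (m * (m / 2)) = 4 * M / m"
  by (simp add: field_simps)

context
  fixes N :: nat and b c r :: real
  assumes N3: "N \<ge> 3"
begin

lemma N2: "N \<ge> 2" using N3 by simp
lemma Npos: "real N > 0" using N3 by simp
lemma N1pos: "real N - 1 > 0" using N3 by simp

lemma dd0_pos: "dd0 N b c r > 0"
  unfolding dd0_def using MM_ge1[of b c r] Npos by simp

lemma delta_M:
  assumes "0 \<le> \<delta>" "\<delta> \<le> dd0 N b c r"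
  shows "\<delta> * MM b c r \<le> 1 / (16 * real N)"
proof -
  have M: "MM b c r \<ge> 1" by (rule MM_ge1)
  have "\<delta> * MM b c r \<le> dd0 N b c r * MM b c r"
    using assms M by (simp add: mult_right_mono)
  also have "\<dots> = 1 / (16 * real N)" unfolding dd0_def using M Npos by (simp add: field_simps)
  finally show ?thesis .
qed

lemma den_lower:
  assumes "0 \<le> \<delta>" "\<delta> \<le> dd0 N b c r" "i < N"
  shows "2 * (real N - 1 + \<delta> * UU N b c r s i) \<ge> real N - 1"
proof -
  have U: "\<bar>UU N b c r s i\<bar> \<le> (real N - 1) * MM b c r" by (rule UU_bound[OF assms(3) N2])
  have dm: "\<delta> * MM b c r \<le> 1 / (16 * real N)" by (rule delta_M[OF assms(1,2)])
  have "1 / (16 * real N) \<le> 1/2" using N3 by (simp add: field_simps)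
  then have dm2: "\<delta> * MM b c r \<le> 1/2" using dm by linarith
  have "\<bar>\<delta> * UU N b c r s i\<bar> \<le> \<delta> * ((real N - 1) * MM b c r)"
    using U assms(1) by (simp add: abs_mult mult_left_mono)
  also have "\<dots> = (real N - 1) * (\<delta> * MM b c r)" by simp
  also have "\<dots> \<le> (real N - 1) * (1/2)" using dm2 N1pos by (intro mult_left_mono) auto
  finally have "\<bar>\<delta> * UU N b c r s i\<bar> \<le> (real N - 1) * (1/2)" .
  then show ?thesis unfolding abs_le_iff by (simp add: algebra_simps)
qed

lemma fec_pos:
  assumes "0 \<le> \<delta>" "\<delta> \<le> dd0 N b c r" "k < N"
  shows "fecundity N b c r \<delta> s k > 0"
proof -
  have P: "\<bar>payoff N b c r s k\<bar> \<le> MM b c r" by (rule payoff_bound[OF assms(3) N2])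
  have dm: "\<delta> * MM b c r \<le> 1 / (16 * real N)" by (rule delta_M[OF assms(1,2)])
  have "1 / (16 * real N) < 1" using N3 by (simp add: field_simps)
  have "\<bar>\<delta> * payoff N b c r s k\<bar> \<le> \<delta> * MM b c r"
    using P assms(1) by (simp add: abs_mult mult_left_mono)
  then show ?thesis unfolding fecundity_def using dm \<open>1 / (16 * real N) < 1\<close> by linarith
qed

lemma fec_den_pos:
  assumes "0 \<le> \<delta>" "\<delta> \<le> dd0 N b c r" "i < N"
  shows "(\<Sum>k\<in>{..<N} - {i}. fecundity N b c r \<delta> s k) > 0"
  using den_lower[OF assms, where s=s] N1pos fec_sum[OF assms(3), where s=s and b=b and c=c and r=r and \<delta>=\<delta>] by (smt (verit))

lemma w_decomp:
  assumes "0 \<le> \<delta>" "\<delta> \<le> dd0 N b c r" "i < N"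
  shows "fecundity N b c r \<delta> s j / (\<Sum>k\<in>{..<N} - {i}. fecundity N b c r \<delta> s k)
       = 1 / (real N - 1) + \<delta> * ee N b c r \<delta> s i j"
proof -
  have D: "real N - 1 + \<delta> * UU N b c r s i > 0" using den_lower[OF assms, where s=s] N1pos by (smt (verit))
  have eq: "(\<Sum>k\<in>{..<N} - {i}. fecundity N b c r \<delta> s k) = real N - 1 + \<delta> * UU N b c r s i"
    by (rule fec_sum[OF assms(3)])
  show ?thesis
    unfolding eq unfolding ee_def fecundity_def
    using w_aux[OF N1pos D] by simp
qed

lemma ee_bound:
  assumes "0 \<le> \<delta>" "\<delta> \<le> dd0 N b c r" "i < N" "j < N"
  shows "\<bar>ee N b c r \<delta> s i j\<bar> \<le> 4 * MM b c r / (real N - 1)"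
proof -
  let ?M = "MM b c r"
  have P: "\<bar>payoff N b c r s j\<bar> \<le> ?M" by (rule payoff_bound[OF assms(4) N2])
  have U: "\<bar>UU N b c r s i\<bar> \<le> (real N - 1) * ?M" by (rule UU_bound[OF assms(3) N2])
  have D0: "2 * (real N - 1 + \<delta> * UU N b c r s i) \<ge> real N - 1" by (rule den_lower[OF assms(1-3)])
  then have D: "real N - 1 + \<delta> * UU N b c r s i \<ge> (real N - 1) / 2" by (simp add: field_simps)
  have num: "\<bar>(real N - 1) * payoff N b c r s j - UU N b c r s i\<bar> \<le> 2 * (real N - 1) * ?M"
  proof -
    have "\<bar>(real N - 1) * payoff N b c r s j\<bar> \<le> (real N - 1) * ?M"
      using P N1pos by (simp add: abs_mult mult_left_mono)
    then show ?thesis using U by linarith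
  qed
  have den: "(real N - 1) * (real N - 1 + \<delta> * UU N b c r s i) \<ge> (real N - 1) * ((real N - 1) / 2)"
    using D N1pos by (intro mult_left_mono) auto
  have denpos: "(real N - 1) * ((real N - 1) / 2) > 0" using N1pos by simp
  have "\<bar>ee N b c r \<delta> s i j\<bar> = \<bar>(real N - 1) * payoff N b c r s j - UU N b c r s i\<bar>
        / ((real N - 1) * (real N - 1 + \<delta> * UU N b c r s i))"
    unfolding ee_def using den denpos by (simp add: abs_divide)
  also have "\<dots> \<le> (2 * (real N - 1) * ?M) / ((real N - 1) * ((real N - 1) / 2))"
    by (rule frac_le) (use num den denpos MM_ge1[of b c r] N1pos in auto)
  also have "\<dots> = 4 * ?M / (real N - 1)" using frac_aux[OF N1pos] .
  finally show ?thesis .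
qed

end



lemma dsum_split_w:
  fixes w ee g :: "nat \<Rightarrow> nat \<Rightarrow> real"
  assumes "\<And>i j. i \<in> I \<Longrightarrow> w i j = k + \<delta> * ee i j"
  shows "(\<Sum>i\<in>I. \<Sum>j\<in>J i. a * w i j * g i j) = a * k * (\<Sum>i\<in>I. \<Sum>j\<in>J i. g i j) + \<delta> * (\<Sum>i\<in>I. \<Sum>j\<in>J i. a * ee i j * g i j)"
proof -
  have "(\<Sum>i\<in>I. \<Sum>j\<in>J i. a * w i j * g i j) = (\<Sum>i\<in>I. \<Sum>j\<in>J i. a * k * g i j + \<delta> * (a * ee i j * g i j))"
    by (rule sum.cong[OF refl], rule sum.cong[OF refl]) (simp add: assms algebra_simps)
  also have "\<dots> = a * k * (\<Sum>i\<in>I. \<Sum>j\<in>J i. g i j) + \<delta> * (\<Sum>i\<in>I. \<Sum>j\<in>J i. a * ee i j * g i j)"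
    by (simp add: sum.distrib sum_distrib_left)
  finally show ?thesis .
qed

lemma nn_bounds: "0 \<le> nn N z \<and> nn N z \<le> real N"
proof
  show "0 \<le> nn N z" unfolding nn_def by (rule sum_nonneg) simp
  have "nn N z \<le> (\<Sum>i<N. 1)" unfolding nn_def by (rule sum_mono) simp
  then show "nn N z \<le> real N" by simp
qed

lemma VV_nonneg: "VV N z \<ge> 0"
  unfolding VV_def using nn_bounds[of N z] by simp

context
  fixes N :: nat and b c r :: real
  assumes N3: "N \<ge> 3"
begin

abbreviation "FF \<delta> s \<equiv> fecundity N b c r \<delta> s"

lemma den_ne0:
  assumes "0 \<le> \<delta>" "\<delta> \<le> dd0 N b c r"
  shows "\<And>i. i < N \<Longrightarrow> (\<Sum>k\<in>{..<N} - {i}. FF \<delta> s k) \<noteq> 0"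
  using fec_den_pos[OF N3 assms] by (metis less_irrefl)

lemma E_nn:
  assumes "0 \<le> \<delta>" "\<delta> \<le> dd0 N b c r"
  shows "E1 N (FF \<delta> s) (fst s) (nn N) = nn N (fst s) + \<delta> * QQ N b c r \<delta> s"
proof -
  have N1: "N \<ge> 1" using N3 by simp
  have "E1 N (FF \<delta> s) (fst s) (nn N) = nn N (fst s) + (\<Sum>i<N. \<Sum>j\<in>{..<N} - {i}. (1 / real N) * (FF \<delta> s j / (\<Sum>k\<in>{..<N} - {i}. FF \<delta> s k)) * (of_bool (fst s j) - of_bool (fst s i)))"
    by (rule E1_nn[OF den_ne0[OF assms] N1])
  also have "(\<Sum>i<N. \<Sum>j\<in>{..<N} - {i}. (1 / real N) * (FF \<delta> s j / (\<Sum>k\<in>{..<N} - {i}. FF \<delta> s k)) * (of_bool (fst s j) - of_bool (fst s i)))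
    = (1 / real N) * (1 / (real N - 1)) * (\<Sum>i<N. \<Sum>j\<in>{..<N} - {i}. (of_bool (fst s j) - of_bool (fst s i)))
      + \<delta> * QQ N b c r \<delta> s"
    unfolding QQ_def
    by (rule dsum_split_w) (simp add: w_decomp[OF N3 assms])
  also have "\<dots> = \<delta> * QQ N b c r \<delta> s" by (simp add: pair0)
  finally show ?thesis .
qed

definition KK :: real where "KK = 4 * MM b c r / (real N - 1)"

lemma KK_nonneg: "KK \<ge> 0"
  unfolding KK_def using MM_ge1[of b c r] N1pos[OF N3] by simp

lemma QQ_bound:
  assumes "0 \<le> \<delta>" "\<delta> \<le> dd0 N b c r"
  shows "\<bar>QQ N b c r \<delta> s\<bar> \<le> 2 * KK / real N * VV N (fst s)"
proof -
  let ?d = "\<lambda>i j. (of_bool (fst s j) - of_bool (fst s i) :: real)"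
  have "\<bar>QQ N b c r \<delta> s\<bar> \<le> (\<Sum>i<N. \<Sum>j\<in>{..<N} - {i}. \<bar>(1 / real N) * ee N b c r \<delta> s i j * ?d i j\<bar>)"
    unfolding QQ_def by (rule order_trans[OF sum_abs sum_mono], rule sum_abs)
  also have "\<dots> \<le> (\<Sum>i<N. \<Sum>j\<in>{..<N} - {i}. (KK / real N) * (?d i j)^2)"
  proof (rule sum_mono, rule sum_mono)
    fix i j assume i: "i \<in> {..<N}" and j: "j \<in> {..<N} - {i}"
    have e: "\<bar>ee N b c r \<delta> s i j\<bar> \<le> KK" unfolding KK_def
      using ee_bound[OF N3 assms] i j by auto
    have dd: "\<bar>?d i j\<bar> = (?d i j)^2" by (cases "fst s i"; cases "fst s j") auto
    have "\<bar>(1 / real N) * ee N b c r \<delta> s i j * ?d i j\<bar> = (1 / real N) * (\<bar>ee N b c r \<delta> s i j\<bar> * (?d i j)^2)"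
      by (simp add: abs_mult dd)
    also have "\<dots> \<le> (1 / real N) * (KK * (?d i j)^2)"
      by (intro mult_left_mono mult_right_mono e) auto
    finally show "\<bar>(1 / real N) * ee N b c r \<delta> s i j * ?d i j\<bar> \<le> (KK / real N) * (?d i j)^2" by simp
  qed
  also have "\<dots> = (KK / real N) * (2 * nn N (fst s) * (real N - nn N (fst s)))"
    by (simp only: sum_distrib_left[symmetric] pair2)
  also have "\<dots> = 2 * KK / real N * VV N (fst s)" by (simp add: VV_def)
  finally show ?thesis .
qed


lemma sum_w_d:
  assumes "0 \<le> \<delta>" "\<delta> \<le> dd0 N b c r"
  shows "(\<Sum>i<N. \<Sum>j\<in>{..<N} - {i}. (1 / real N) * (FF \<delta> s j / (\<Sum>k\<in>{..<N} - {i}. FF \<delta> s k)) * (of_bool (fst s j) - of_bool (fst s i)))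
    = \<delta> * QQ N b c r \<delta> s"
proof -
  have "(\<Sum>i<N. \<Sum>j\<in>{..<N} - {i}. (1 / real N) * (FF \<delta> s j / (\<Sum>k\<in>{..<N} - {i}. FF \<delta> s k)) * (of_bool (fst s j) - of_bool (fst s i)))
    = (1 / real N) * (1 / (real N - 1)) * (\<Sum>i<N. \<Sum>j\<in>{..<N} - {i}. (of_bool (fst s j) - of_bool (fst s i)))
      + \<delta> * QQ N b c r \<delta> s"
    unfolding QQ_def
    by (rule dsum_split_w) (simp add: w_decomp[OF N3 assms])
  also have "\<dots> = \<delta> * QQ N b c r \<delta> s" by (simp add: pair0)
  finally show ?thesis .
qed

lemma tK_bound:
  assumes "0 \<le> \<delta>" "\<delta> \<le> dd0 N b c r"
  shows "0 \<le> \<delta> * KK \<and> 4 * (\<delta> * KK) \<le> 1 / (real N * (real N - 1))"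
proof
  have M: "MM b c r \<ge> 1" by (rule MM_ge1)
  have N1: "real N - 1 > 0" by (rule N1pos[OF N3])
  show "0 \<le> \<delta> * KK" unfolding KK_def using assms M N1 by simp
  have dm: "\<delta> * MM b c r \<le> 1 / (16 * real N)" by (rule delta_M[OF N3 assms])
  have "4 * (\<delta> * KK) = 16 * (\<delta> * MM b c r) / (real N - 1)" unfolding KK_def by (simp add: field_simps)
  also have "\<dots> \<le> 16 * (1 / (16 * real N)) / (real N - 1)"
    by (intro divide_right_mono mult_left_mono dm) (use N1 in auto)
  also have "\<dots> = 1 / (real N * (real N - 1))" by simp
  finally show "4 * (\<delta> * KK) \<le> 1 / (real N * (real N - 1))" .
qed

lemma E_VV:
  assumes "0 \<le> \<delta>" "\<delta> \<le> dd0 N b c r"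
  shows "E1 N (FF \<delta> s) (fst s) (VV N) \<le> (1 - 1 / (real N * (real N - 1))) * VV N (fst s)"
proof -
  have N1: "N \<ge> 1" using N3 by simp
  have Npos: "real N > 0" using N3 by simp
  have N1p: "real N - 1 > 0" by (rule N1pos[OF N3])
  let ?d = "\<lambda>i j. (of_bool (fst s j) - of_bool (fst s i) :: real)"
  let ?w = "\<lambda>i j. FF \<delta> s j / (\<Sum>k\<in>{..<N} - {i}. FF \<delta> s k)"
  define V where "V = VV N (fst s)"
  define n where "n = nn N (fst s)"
  define t where "t = \<delta> * KK"
  define e where "e = 1 / (real N * (real N - 1))"
  define B where "B = (\<Sum>i<N. \<Sum>j\<in>{..<N} - {i}. (1 / real N) * ?w i j * (?d i j)^2)"
  have V0: "V \<ge> 0" unfolding V_def by (rule VV_nonneg)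
  have t: "0 \<le> t" "4 * t \<le> e" unfolding t_def e_def using tK_bound[OF assms] by auto
  have main: "E1 N (FF \<delta> s) (fst s) (VV N) = V + (real N - 2 * n) * (\<delta> * QQ N b c r \<delta> s) - B"
    unfolding V_def n_def B_def
    using E1_VV[OF den_ne0[OF assms] N1, of s "fst s"] sum_w_d[OF assms, of s] by simp
  have nb: "0 \<le> n" "n \<le> real N" unfolding n_def using nn_bounds by auto
  have X: "(real N - 2 * n) * (\<delta> * QQ N b c r \<delta> s) \<le> 2 * (t * V)"
  proof -
    have "(real N - 2 * n) * (\<delta> * QQ N b c r \<delta> s) \<le> \<bar>real N - 2 * n\<bar> * (\<delta> * \<bar>QQ N b c r \<delta> s\<bar>)"
      using assms(1) by (metis abs_ge_self abs_mult abs_of_nonneg)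
    also have "\<dots> \<le> real N * (\<delta> * (2 * KK / real N * V))"
      apply (intro mult_mono mult_left_mono)
      using nb assms(1) QQ_bound[OF assms, of s] unfolding V_def by (auto simp: abs_le_iff)
    also have "\<dots> = 2 * (t * V)" unfolding t_def using Npos by (simp add: field_simps)
    finally show ?thesis .
  qed
  have Bb: "B \<ge> (1 / real N) * (1 / (real N - 1) - t) * (2 * V)"
  proof -
    have "(\<Sum>i<N. \<Sum>j\<in>{..<N} - {i}. (1 / real N) * (1 / (real N - 1) - t) * (?d i j)^2) \<le> B"
      unfolding B_def
    proof (rule sum_mono, rule sum_mono)
      fix i j assume i: "i \<in> {..<N}" and j: "j \<in> {..<N} - {i}"
      have e: "\<bar>ee N b c r \<delta> s i j\<bar> \<le> KK" unfolding KK_def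
        using ee_bound[OF N3 assms] i j by auto
      have "\<delta> * ee N b c r \<delta> s i j \<ge> - t"
      proof -
        have "- KK \<le> ee N b c r \<delta> s i j" using e by (simp add: abs_le_iff)
        then have "\<delta> * (- KK) \<le> \<delta> * ee N b c r \<delta> s i j" using assms(1) by (rule mult_left_mono)
        then show ?thesis unfolding t_def by simp
      qed
      then have "?w i j \<ge> 1 / (real N - 1) - t" using w_decomp[OF N3 assms] i by simp
      then show "(1 / real N) * (1 / (real N - 1) - t) * (?d i j)^2 \<le> (1 / real N) * ?w i j * (?d i j)^2"
        using Npos by (intro mult_right_mono mult_left_mono) auto
    qed
    moreover have "(\<Sum>i<N. \<Sum>j\<in>{..<N} - {i}. (1 / real N) * (1 / (real N - 1) - t) * (?d i j)^2)
       = (1 / real N) * (1 / (real N - 1) - t) * (2 * V)"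
      unfolding V_def VV_def by (simp only: sum_distrib_left[symmetric] pair2)
    ultimately show ?thesis by simp
  qed
  have "(1 / real N) * (1 / (real N - 1) - t) * (2 * V) = 2 * (e * V) - 2 * ((t * V) / real N)"
    unfolding e_def using Npos N1p by (simp add: field_simps)
  moreover have "(t * V) / real N \<le> t * V"
  proof -
    have tv: "t * V \<ge> 0" using t V0 by simp
    have "(t * V) / real N \<le> (t * V) / 1"
      by (rule divide_left_mono[OF _ tv]) (use N3 in auto)
    then show ?thesis by simp
  qed
  moreover have "4 * (t * V) \<le> e * V" using t V0 by (metis mult.assoc mult_right_mono)
  ultimately have "E1 N (FF \<delta> s) (fst s) (VV N) \<le> V - e * V"
    using main X Bb by linarith
  then show ?thesis unfolding e_def V_def by (simp add: algebra_simps)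
qed

end



lemma inner_lin:
  fixes u X :: "nat \<Rightarrow> real"
  shows "(\<Sum>j<N. (A * u j + B) * (X j - C)) = A * (\<Sum>j<N. u j * X j) - A * C * (\<Sum>j<N. u j) + B * (\<Sum>j<N. X j) - real N * B * C"
  by (simp add: algebra_simps sum.distrib sum_subtractf sum_distrib_left sum_distrib_right)

lemma outer_lin:
  fixes u X :: "nat \<Rightarrow> real"
  assumes "T = (\<Sum>i<N. u i)" "SX = (\<Sum>i<N. X i)" "UX = (\<Sum>i<N. u i * X i)"
  shows "(\<Sum>i<N. A * UX - A * X i * T + (u i - T) * SX - real N * (u i - T) * X i)
    = real N * A * UX - A * SX * T + (T - real N * T) * SX - real N * (UX - T * SX)"
  using assms by (simp add: algebra_simps sum.distrib sum_subtractf sum_distrib_left sum_distrib_right) (rule sum.swap)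

lemma G1:
  fixes u X :: "nat \<Rightarrow> real"
  shows "(\<Sum>i<N. \<Sum>j\<in>{..<N} - {i}. ((real N - 1) * u j - (\<Sum>k\<in>{..<N} - {i}. u k)) * (X j - X i))
    = (real N - 2) * (real N * (\<Sum>j<N. u j * X j) - (\<Sum>j<N. u j) * (\<Sum>j<N. X j))"
proof -
  define T where "T = (\<Sum>i<N. u i)"
  define SX where "SX = (\<Sum>i<N. X i)"
  define UX where "UX = (\<Sum>i<N. u i * X i)"
  have "(\<Sum>i<N. \<Sum>j\<in>{..<N} - {i}. ((real N - 1) * u j - (\<Sum>k\<in>{..<N} - {i}. u k)) * (X j - X i))
     = (\<Sum>i<N. (real N - 1) * UX - (real N - 1) * X i * T + (u i - T) * SX - real N * (u i - T) * X i)"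
  proof (rule sum.cong[OF refl])
    fix i assume i: "i \<in> {..<N}"
    have "(\<Sum>j\<in>{..<N} - {i}. ((real N - 1) * u j - (\<Sum>k\<in>{..<N} - {i}. u k)) * (X j - X i))
       = (\<Sum>j\<in>{..<N} - {i}. ((real N - 1) * u j + (u i - T)) * (X j - X i))"
      using i by (simp add: sum_minus_i T_def algebra_simps)
    also have "\<dots> = (\<Sum>j<N. ((real N - 1) * u j + (u i - T)) * (X j - X i))"
      using i by (simp add: sum_minus_i)
    also have "\<dots> = (real N - 1) * UX - (real N - 1) * X i * T + (u i - T) * SX - real N * (u i - T) * X i"
      unfolding inner_lin UX_def T_def SX_def ..
    finally show "(\<Sum>j\<in>{..<N} - {i}. ((real N - 1) * u j - (\<Sum>k\<in>{..<N} - {i}. u k)) * (X j - X i))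
       = (real N - 1) * UX - (real N - 1) * X i * T + (u i - T) * SX - real N * (u i - T) * X i" .
  qed
  also have "\<dots> = real N * (real N - 1) * UX - (real N - 1) * SX * T + (T - real N * T) * SX - real N * (UX - T * SX)"
    by (rule outer_lin) (simp_all add: T_def SX_def UX_def)
  also have "\<dots> = (real N - 2) * (real N * UX - T * SX)" by (simp add: algebra_simps)
  finally show ?thesis unfolding T_def SX_def UX_def .
qed

definition WW :: "nat \<Rightarrow> state \<Rightarrow> real" where
  "WW N s = real N * (\<Sum>l<N. of_bool (fst s l) * of_bool (snd s l)) - nn N (fst s) * nn N (snd s)"

context
  fixes N :: nat and b c r :: real
  assumes N3: "N \<ge> 3"
begin

definition aa :: real where "aa = - c - b / (real N - 1)"

lemma aa_eq: "aa = - c - b / (real N - 1)" by (simp add: aa_def)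

lemma payoff_dec:
  assumes "j < N"
  shows "payoff N b c r s j = aa * of_bool (fst s j) + (r - 1) * of_bool (snd s j) + (b * nn N (fst s) / (real N - 1) + 1)"
proof -
  have N1: "real N - 1 > 0" by (rule N1pos[OF N3])
  have S: "(\<Sum>k\<in>{..<N} - {j}. (of_bool (fst s k) :: real)) = nn N (fst s) - of_bool (fst s j)"
    unfolding nn_def using assms by (rule sum_minus_i)
  have alg: "m > 0 \<Longrightarrow> - c * X + b / m * (n - X) + r1 * Y + 1 = (- c - b / m) * X + r1 * Y + (b * n / m + 1)"
    for m X n Y r1 :: real
    by (simp add: field_simps)
  show ?thesis unfolding payoff_def S aa_def by (rule alg[OF N1])
qed

lemma sum_payoff_X:
  "(\<Sum>j<N. payoff N b c r s j * of_bool (fst s j))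
     = aa * nn N (fst s) + (r - 1) * (\<Sum>l<N. of_bool (fst s l) * of_bool (snd s l)) + (b * nn N (fst s) / (real N - 1) + 1) * nn N (fst s)"
proof -
  have "(\<Sum>j<N. payoff N b c r s j * of_bool (fst s j))
     = (\<Sum>j<N. aa * of_bool (fst s j) + (r - 1) * (of_bool (fst s j) * of_bool (snd s j)) + (b * nn N (fst s) / (real N - 1) + 1) * of_bool (fst s j))"
    by (rule sum.cong[OF refl]) (auto simp: payoff_dec algebra_simps)
  also have "\<dots> = aa * nn N (fst s) + (r - 1) * (\<Sum>l<N. of_bool (fst s l) * of_bool (snd s l)) + (b * nn N (fst s) / (real N - 1) + 1) * nn N (fst s)"
    unfolding nn_def by (simp add: sum.distrib sum_distrib_left)
  finally show ?thesis .
qed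

lemma sum_payoff:
  "(\<Sum>j<N. payoff N b c r s j)
     = aa * nn N (fst s) + (r - 1) * nn N (snd s) + real N * (b * nn N (fst s) / (real N - 1) + 1)"
proof -
  have "(\<Sum>j<N. payoff N b c r s j)
     = (\<Sum>j<N. aa * of_bool (fst s j) + (r - 1) * of_bool (snd s j) + (b * nn N (fst s) / (real N - 1) + 1))"
    by (rule sum.cong[OF refl]) (auto simp: payoff_dec)
  also have "\<dots> = aa * nn N (fst s) + (r - 1) * nn N (snd s) + real N * (b * nn N (fst s) / (real N - 1) + 1)"
    unfolding nn_def by (simp add: sum.distrib sum_distrib_left)
  finally show ?thesis .
qed

lemma QQ0:
  "QQ N b c r 0 s = (real N - 2) / (real N * (real N - 1) * (real N - 1)) * (aa * VV N (fst s) + (r - 1) * WW N s)"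
proof -
  let ?X = "\<lambda>j. (of_bool (fst s j) :: real)"
  let ?p = "\<lambda>j. payoff N b c r s j"
  have N1: "real N - 1 > 0" by (rule N1pos[OF N3])
  have "QQ N b c r 0 s = (\<Sum>i<N. \<Sum>j\<in>{..<N} - {i}.
      (1 / (real N * (real N - 1) * (real N - 1))) * (((real N - 1) * ?p j - (\<Sum>k\<in>{..<N} - {i}. ?p k)) * (?X j - ?X i)))"
    unfolding QQ_def ee_def UU_def
    by (rule sum.cong[OF refl], rule sum.cong[OF refl]) simp
  also have "\<dots> = (1 / (real N * (real N - 1) * (real N - 1))) * (\<Sum>i<N. \<Sum>j\<in>{..<N} - {i}.
      ((real N - 1) * ?p j - (\<Sum>k\<in>{..<N} - {i}. ?p k)) * (?X j - ?X i))"
    by (simp only: sum_distrib_left)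
  also have "(\<Sum>i<N. \<Sum>j\<in>{..<N} - {i}. ((real N - 1) * ?p j - (\<Sum>k\<in>{..<N} - {i}. ?p k)) * (?X j - ?X i))
     = (real N - 2) * (real N * (\<Sum>j<N. ?p j * ?X j) - (\<Sum>j<N. ?p j) * (\<Sum>j<N. ?X j))"
    by (rule G1)
  also have "(\<Sum>j<N. ?X j) = nn N (fst s)" by (simp add: nn_def)
  also note sum_payoff_X
  also note sum_payoff
  finally have Q: "QQ N b c r 0 s = 1 / (real N * (real N - 1) * (real N - 1)) *
    ((real N - 2) * (real N * (aa * nn N (fst s) + (r - 1) * (\<Sum>l<N. of_bool (fst s l) * of_bool (snd s l)) + (b * nn N (fst s) / (real N - 1) + 1) * nn N (fst s))
     - (aa * nn N (fst s) + (r - 1) * nn N (snd s) + real N * (b * nn N (fst s) / (real N - 1) + 1)) * nn N (fst s)))" .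
  have alg: "NN * (A * n + r1 * k + \<kappa> * n) - (A * n + r1 * m + NN * \<kappa>) * n = A * (n * (NN - n)) + r1 * (NN * k - n * m)"
    for NN A n r1 k \<kappa> m :: real
    by (simp add: algebra_simps)
  show ?thesis unfolding Q alg VV_def WW_def by simp
qed

end



context
  fixes N :: nat and b c r :: real
  assumes N3: "N \<ge> 3"
begin

lemma trans_cont: "isCont (\<lambda>\<delta>. trans_prob N b c r \<delta> s s') 0"
  unfolding trans_prob_def layer_prob_def fecundity_def
  by (intro continuous_intros) (auto simp: card_minus_i)

lemma QQ_cont: "isCont (\<lambda>\<delta>. QQ N b c r \<delta> s) 0"
  unfolding QQ_def ee_def
  using N1pos[OF N3] by (intro continuous_intros) auto

lemma trans_sum1:
  assumes "s \<in> states N" "0 \<le> \<delta>" "\<delta> \<le> dd0 N b c r"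
  shows "(\<Sum>s'\<in>states N. trans_prob N b c r \<delta> s s' * g (fst s')) = E1 N (fecundity N b c r \<delta> s) (fst s) g"
proof -
  have N1: "N \<ge> 1" using N3 by simp
  have "(\<Sum>s'\<in>states N. trans_prob N b c r \<delta> s s' * g (fst s'))
      = (\<Sum>s'\<in>states N. trans_prob N b c r \<delta> s s' * (g (fst s') * (\<lambda>_. 1) (snd s')))" by simp
  also have "\<dots> = E1 N (fecundity N b c r \<delta> s) (fst s) g * E1 N (fecundity N b c r \<delta> s) (snd s) (\<lambda>_. 1)"
    by (rule trans_sum[OF assms(1)])
  also have "E1 N (fecundity N b c r \<delta> s) (snd s) (\<lambda>_. 1) = 1"
    by (rule E1_one[OF den_ne0[OF N3 assms(2,3)] N1])
  finally show ?thesis by simp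
qed

lemma P_nonneg:
  assumes "0 \<le> \<delta>" "\<delta> \<le> dd0 N b c r"
  shows "trans_prob N b c r \<delta> s s' \<ge> 0"
proof -
  have lp: "layer_prob N (fecundity N b c r \<delta> s) z z' \<ge> 0" for z z'
    unfolding layer_prob_def
  proof (intro sum_nonneg)
    fix i j assume i: "i \<in> {..<N}" and j: "j \<in> {..<N} - {i}"
    have "fecundity N b c r \<delta> s j > 0" using fec_pos[OF N3 assms] j by auto
    moreover have "(\<Sum>k\<in>{..<N} - {i}. fecundity N b c r \<delta> s k) > 0" using fec_den_pos[OF N3 assms] i by auto
    ultimately show "0 \<le> 1 / real N * (fecundity N b c r \<delta> s j / (\<Sum>k\<in>{..<N} - {i}. fecundity N b c r \<delta> s k)) * of_bool (z' = z(i := z j))"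
      by simp
  qed
  show ?thesis unfolding trans_prob_def using lp by simp
qed

lemma P_row:
  assumes "s \<in> states N" "0 \<le> \<delta>" "\<delta> \<le> dd0 N b c r"
  shows "(\<Sum>s'\<in>states N. trans_prob N b c r \<delta> s s') = 1"
proof -
  have N1: "N \<ge> 1" using N3 by simp
  have "(\<Sum>s'\<in>states N. trans_prob N b c r \<delta> s s') = (\<Sum>s'\<in>states N. trans_prob N b c r \<delta> s s' * (\<lambda>_. 1) (fst s'))" by simp
  also have "\<dots> = 1" using trans_sum1[OF assms, of "\<lambda>_. 1"] E1_one[OF den_ne0[OF N3 assms(2,3), where s=s] N1, where z="fst s"] by simp
  finally show ?thesis .
qed

lemma P_nn:
  assumes "s \<in> states N" "0 \<le> \<delta>" "\<delta> \<le> dd0 N b c r"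
  shows "(\<Sum>s'\<in>states N. trans_prob N b c r \<delta> s s' * nn N (fst s')) = nn N (fst s) + \<delta> * QQ N b c r \<delta> s"
  using trans_sum1[OF assms, of "nn N"] E_nn[OF N3 assms(2,3)] by simp

lemma P_VV:
  assumes "s \<in> states N" "0 \<le> \<delta>" "\<delta> \<le> dd0 N b c r"
  shows "(\<Sum>s'\<in>states N. trans_prob N b c r \<delta> s s' * VV N (fst s')) \<le> (1 - 1 / (real N * (real N - 1))) * VV N (fst s)"
  using trans_sum1[OF assms, of "VV N"] E_VV[OF N3 assms(2,3)] by simp

lemma FF0: "fecundity N b c r 0 s = (\<lambda>_. 1)"
  by (simp add: fecundity_def fun_eq_iff)

lemma E1_0_eq:
  "E1 N (\<lambda>_. 1) x h = (\<Sum>i<N. \<Sum>j\<in>{..<N} - {i}. (1 / (real N * (real N - 1))) * h (x(i := x j)))"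
  unfolding E1_def
  by (rule sum.cong[OF refl], rule sum.cong[OF refl]) (auto simp: card_minus_i)

lemma alg:
  fixes n X S :: real
  assumes "n > 1"
  shows "n * (1 / (n * (n - 1)) * (n - 1) * X) + (1 / (n * (n - 1)) * (S - X) - 1 / (n * (n - 1)) * (n - 1) * X)
    = (n - 2) / (n - 1) * X + S / (n * (n - 1))"
proof -
  have a: "n \<noteq> 0" "n - 1 \<noteq> 0" using assms by auto
  have f2: "1 / (n * (n - 1)) * (n - 1) * X = X / n" using a by simp
  have f1: "n * (X / n) = X" using a by simp
  have f3: "1 / (n * (n - 1)) * (S - X) = S / (n * (n - 1)) - X / (n * (n - 1))" by (simp add: diff_divide_distrib)
  have f4: "(n - 2) / (n - 1) * X = X - X / (n * (n - 1)) - X / n"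
    using a by (simp add: field_simps)
  show ?thesis by (simp only: f1 f2 f3 f4)
qed

lemma E1_0_X:
  assumes "l < N"
  shows "E1 N (\<lambda>_. 1) x (\<lambda>z. of_bool (z l)) = (real N - 2) / (real N - 1) * of_bool (x l) + nn N x / (real N * (real N - 1))"
proof -
  define \<beta> where "\<beta> = 1 / (real N * (real N - 1))"
  have N1: "real N - 1 > 0" by (rule N1pos[OF N3])
  have "E1 N (\<lambda>_. 1) x (\<lambda>z. of_bool (z l)) = (\<Sum>i<N. \<beta> * (real N - 1) * of_bool (x l) + (if i = l then \<beta> * (nn N x - of_bool (x l)) - \<beta> * (real N - 1) * of_bool (x l) else 0))"
    unfolding E1_0_eq \<beta>_def[symmetric]
  proof (rule sum.cong[OF refl])
    fix i assume i: "i \<in> {..<N}"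
    show "(\<Sum>j\<in>{..<N} - {i}. \<beta> * of_bool ((x(i := x j)) l)) = \<beta> * (real N - 1) * of_bool (x l) + (if i = l then \<beta> * (nn N x - of_bool (x l)) - \<beta> * (real N - 1) * of_bool (x l) else 0)"
    proof (cases "i = l")
      case True
      have "(\<Sum>j\<in>{..<N} - {i}. \<beta> * of_bool ((x(i := x j)) l)) = \<beta> * (\<Sum>j\<in>{..<N} - {i}. of_bool (x j))"
        using True by (simp add: sum_distrib_left)
      also have "(\<Sum>j\<in>{..<N} - {i}. (of_bool (x j)::real)) = nn N x - of_bool (x l)"
        unfolding nn_def using i True by (simp add: sum_minus_i)
      finally show ?thesis using True by simp
    next
      case False
      have "(\<Sum>j\<in>{..<N} - {i}. \<beta> * of_bool ((x(i := x j)) l)) = (\<Sum>j\<in>{..<N} - {i}. \<beta> * of_bool (x l))"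
        using False by (intro sum.cong) auto
      also have "\<dots> = \<beta> * (real N - 1) * of_bool (x l)" using card_minus_i[OF i[simplified]] by simp
      finally show ?thesis using False by simp
    qed
  qed
  also have "\<dots> = real N * (\<beta> * (real N - 1) * of_bool (x l)) + (\<beta> * (nn N x - of_bool (x l)) - \<beta> * (real N - 1) * of_bool (x l))"
    using assms by (simp add: sum.distrib)
  also have "\<dots> = (real N - 2) / (real N - 1) * of_bool (x l) + nn N x / (real N * (real N - 1))"
    unfolding \<beta>_def by (rule alg) (use N3 in simp)
  finally show ?thesis .
qed

lemma den1: "i < N \<Longrightarrow> (\<Sum>k\<in>{..<N} - {i}. (\<lambda>_. 1::real) k) \<noteq> 0"
  using card_minus_i[of i N] N1pos[OF N3] by simp

lemma E1_0_nn: "E1 N (\<lambda>_. 1) x (nn N) = nn N x"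
proof -
  have N1: "N \<ge> 1" using N3 by simp
  have "E1 N (\<lambda>_. 1) x (nn N) = nn N x + (\<Sum>i<N. \<Sum>j\<in>{..<N} - {i}. (1 / real N) * (1 / (real N - 1)) * (of_bool (x j) - of_bool (x i)))"
    using E1_nn[OF den1 N1, of x] by (simp add: card_minus_i)
  also have "\<dots> = nn N x" by (simp only: sum_distrib_left[symmetric] pair0)
  finally show ?thesis .
qed

lemma E1_0_VV: "E1 N (\<lambda>_. 1) x (VV N) = (1 - 2 / (real N * (real N - 1))) * VV N x"
proof -
  have N1: "N \<ge> 1" using N3 by simp
  have Np: "real N - 1 > 0" by (rule N1pos[OF N3])
  have "E1 N (\<lambda>_. 1) x (VV N) = VV N x
     + (real N - 2 * nn N x) * (\<Sum>i<N. \<Sum>j\<in>{..<N} - {i}. (1 / real N) * (1 / (real N - 1)) * (of_bool (x j) - of_bool (x i)))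
     - (\<Sum>i<N. \<Sum>j\<in>{..<N} - {i}. (1 / real N) * (1 / (real N - 1)) * (of_bool (x j) - of_bool (x i))^2)"
    using E1_VV[OF den1 N1, of x] by (simp add: card_minus_i)
  also have "\<dots> = VV N x - (1 / real N) * (1 / (real N - 1)) * (2 * nn N x * (real N - nn N x))"
    by (simp only: sum_distrib_left[symmetric] pair0 pair2)
  also have "\<dots> = (1 - 2 / (real N * (real N - 1))) * VV N x"
    unfolding VV_def using Np N3 by (simp add: field_simps)
  finally show ?thesis .
qed

lemma P0_VV:
  assumes "s \<in> states N"
  shows "(\<Sum>s'\<in>states N. trans_prob N b c r 0 s s' * VV N (fst s')) = (1 - 2 / (real N * (real N - 1))) * VV N (fst s)"
  using trans_sum1[OF assms order_refl less_imp_le[OF dd0_pos[OF N3]], of "VV N"] E1_0_VV unfolding FF0 by simp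

lemma sumW_aux:
  fixes X Y :: "nat \<Rightarrow> real"
  shows "(\<Sum>l<N. (lam * X l + \<beta> * n) * (lam * Y l + \<beta> * m))
    = lam * lam * (\<Sum>l<N. X l * Y l) + lam * \<beta> * m * (\<Sum>l<N. X l) + lam * \<beta> * n * (\<Sum>l<N. Y l) + real N * \<beta> * \<beta> * n * m"
  by (simp add: algebra_simps sum.distrib sum_distrib_left)

lemma P0_WW:
  assumes s: "s \<in> states N"
  shows "(\<Sum>s'\<in>states N. trans_prob N b c r 0 s s' * WW N s') = ((real N - 2) / (real N - 1))^2 * WW N s"
proof -
  let ?P = "\<lambda>s'. trans_prob N b c r 0 s s'"
  let ?X = "\<lambda>l z. (of_bool (z l) :: real)"
  have E0: "E1 N (fecundity N b c r 0 s) = E1 N (\<lambda>_. 1)" by (simp add: FF0)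
  have "(\<Sum>s'\<in>states N. ?P s' * WW N s')
      = real N * (\<Sum>l<N. \<Sum>s'\<in>states N. ?P s' * (?X l (fst s') * ?X l (snd s')))
        - (\<Sum>s'\<in>states N. ?P s' * (nn N (fst s') * nn N (snd s')))"
    unfolding WW_def
    by (simp add: right_diff_distrib sum_subtractf sum_distrib_left mult.left_commute sum.swap[of _ "{..<N}"])
  also have "(\<Sum>l<N. \<Sum>s'\<in>states N. ?P s' * (?X l (fst s') * ?X l (snd s')))
      = (\<Sum>l<N. ((real N - 2) / (real N - 1) * ?X l (fst s) + nn N (fst s) / (real N * (real N - 1)))
               * ((real N - 2) / (real N - 1) * ?X l (snd s) + nn N (snd s) / (real N * (real N - 1))))"
  proof (rule sum.cong[OF refl])
    fix l assume l: "l \<in> {..<N}"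
    show "(\<Sum>s'\<in>states N. ?P s' * (?X l (fst s') * ?X l (snd s')))
      = ((real N - 2) / (real N - 1) * ?X l (fst s) + nn N (fst s) / (real N * (real N - 1)))
               * ((real N - 2) / (real N - 1) * ?X l (snd s) + nn N (snd s) / (real N * (real N - 1)))"
    proof -
      have "(\<Sum>s'\<in>states N. ?P s' * (?X l (fst s') * ?X l (snd s')))
          = E1 N (fecundity N b c r 0 s) (fst s) (\<lambda>z. of_bool (z l)) * E1 N (fecundity N b c r 0 s) (snd s) (\<lambda>z. of_bool (z l))"
        using trans_sum[OF s, where \<delta>=0 and g="\<lambda>z. of_bool (z l)" and h="\<lambda>z. of_bool (z l)"] by simp
      then show ?thesis unfolding E0 using E1_0_X[of l] l by simp
    qed
  qed
  also have "\<dots> = ((real N - 2) / (real N - 1))^2 * (\<Sum>l<N. ?X l (fst s) * ?X l (snd s))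
        + (real N - 2) / (real N - 1) * (1 / (real N * (real N - 1))) * nn N (snd s) * nn N (fst s)
        + (real N - 2) / (real N - 1) * (1 / (real N * (real N - 1))) * nn N (fst s) * nn N (snd s)
        + real N * (1 / (real N * (real N - 1))) * (1 / (real N * (real N - 1))) * nn N (fst s) * nn N (snd s)"
    using sumW_aux[of "(real N - 2) / (real N - 1)" "\<lambda>l. ?X l (fst s)" "1 / (real N * (real N - 1))" "nn N (fst s)" "\<lambda>l. ?X l (snd s)" "nn N (snd s)"]
    by (simp add: nn_def power2_eq_square)
  also have "(\<Sum>s'\<in>states N. ?P s' * (nn N (fst s') * nn N (snd s'))) = nn N (fst s) * nn N (snd s)"
    using trans_sum[OF s, where \<delta>=0 and g="nn N" and h="nn N" and b=b and c=c and r=r] unfolding E0 E1_0_nn by simp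
  finally have W: "(\<Sum>s'\<in>states N. ?P s' * WW N s') = real N * (((real N - 2) / (real N - 1))^2 * (\<Sum>l<N. ?X l (fst s) * ?X l (snd s))
        + (real N - 2) / (real N - 1) * (1 / (real N * (real N - 1))) * nn N (snd s) * nn N (fst s)
        + (real N - 2) / (real N - 1) * (1 / (real N * (real N - 1))) * nn N (fst s) * nn N (snd s)
        + real N * (1 / (real N * (real N - 1))) * (1 / (real N * (real N - 1))) * nn N (fst s) * nn N (snd s))
        - nn N (fst s) * nn N (snd s)" .
  have key: "real N * (2 * ((real N - 2) / (real N - 1) * (1 / (real N * (real N - 1)))) + real N * (1 / (real N * (real N - 1))) * (1 / (real N * (real N - 1)))) + ((real N - 2) / (real N - 1))^2 = 1"
  proof -
    have a: "real N \<noteq> 0" "real N - 1 \<noteq> 0" using N3 by auto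
    define B where "B = 1 / (real N * (real N - 1))"
    define L where "L = (real N - 2) / (real N - 1)"
    have h1: "real N * B = 1 / (real N - 1)" unfolding B_def using a by simp
    have h2: "L + real N * B = 1" unfolding L_def h1 using a by (simp add: field_simps)
    have "real N * (2 * (L * B) + real N * B * B) + L^2 = (L + real N * B)^2"
      by (simp add: algebra_simps power2_eq_square)
    also have "\<dots> = 1" using h2 by simp
    finally show ?thesis unfolding B_def L_def .
  qed
  define L where "L = (real N - 2) / (real N - 1)"
  define B where "B = 1 / (real N * (real N - 1))"
  define K where "K = (\<Sum>l<N. ?X l (fst s) * ?X l (snd s))"
  define n1 where "n1 = nn N (fst s)"
  define n2 where "n2 = nn N (snd s)"
  have key': "real N * (2 * (L * B) + real N * B * B) = 1 - L^2" using key unfolding L_def B_def by simp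
  have "(\<Sum>s'\<in>states N. ?P s' * WW N s') = real N * (L^2 * K + L * B * n2 * n1 + L * B * n1 * n2 + real N * B * B * n1 * n2) - n1 * n2"
    unfolding W L_def B_def K_def n1_def n2_def ..
  also have "\<dots> = real N * L^2 * K + n1 * n2 * (real N * (2 * (L * B) + real N * B * B)) - n1 * n2"
    by (simp add: algebra_simps)
  also have "\<dots> = L^2 * (real N * K - n1 * n2)" unfolding key' by (simp add: algebra_simps)
  finally show ?thesis unfolding WW_def L_def K_def n1_def n2_def .
qed

end



lemma all_coop_iter:
  "all_coop_prob N b c r \<delta> t s = iterP (trans_prob N b c r \<delta>) (states N) t (\<lambda>s. of_bool (\<forall>i<N. fst s i)) s"
  by (induction t arbitrary: s) auto

lemma nn_card: "nn N z = real (card ({..<N} \<inter> {i. z i}))"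
  unfolding nn_def by (simp add: sum_of_bool_eq)

lemma h_bound:
  assumes "N \<ge> 1"
  shows "\<bar>nn N z / real N - of_bool (\<forall>i<N. z i)\<bar> \<le> VV N z"
proof -
  define k where "k = card ({..<N} \<inter> {i. z i})"
  have kN: "k \<le> N" unfolding k_def by (metis card_lessThan card_mono finite_lessThan inf_le1)
  have nk: "nn N z = real k" unfolding k_def nn_card ..
  show ?thesis
  proof (cases "\<forall>i<N. z i")
    case True
    then have "{..<N} \<inter> {i. z i} = {..<N}" by auto
    then have "k = N" unfolding k_def by simp
    then show ?thesis using True assms unfolding VV_def nk by simp
  next
    case False
    then have "k \<noteq> N"
    proof -
      obtain i where i: "i < N" "\<not> z i" using False by auto
      have "{..<N} \<inter> {i. z i} \<subseteq> {..<N} - {i}" using i by auto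
      then have "k \<le> card ({..<N} - {i})" unfolding k_def by (intro card_mono) auto
      then show ?thesis using i by simp
    qed
    then have k1: "k < N" using kN by simp
    show ?thesis
    proof (cases "k = 0")
      case True
      have ob: "(of_bool (\<forall>i<N. z i)::real) = 0" using False by simp
      show ?thesis using True unfolding VV_def nk ob by simp
    next
      case k0: False
      have "real k / real N \<le> 1" using kN assms by simp
      moreover have "1 \<le> real k * (real N - real k)"
      proof -
        have "1 \<le> real k" using k0 by simp
        moreover have "1 \<le> real N - real k" using k1 by simp
        ultimately show ?thesis using mult_mono[of 1 "real k" 1 "real N - real k"] by simp
      qed
      moreover have "real k / real N \<ge> 0" by simp
      moreover have ob: "(of_bool (\<forall>i<N. z i)::real) = 0" using False by simp
      ultimately show ?thesis unfolding VV_def nk ob by simp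
    qed
  qed
qed

lemma xi_in: "N \<ge> 1 \<Longrightarrow> xi \<in> states N"
  unfolding states_def xi_def by auto

context
  fixes N :: nat and b c r :: real
  assumes N3: "N \<ge> 3"
begin

abbreviation "th \<equiv> 1 - 1 / (real N * (real N - 1))"
abbreviation "CC \<equiv> 2 * KK N b c r / real N"
abbreviation "Sm \<delta> \<equiv> (\<Sum>k. iterP (trans_prob N b c r \<delta>) (states N) k (QQ N b c r \<delta>) xi)"

lemma th_bounds: "0 \<le> th" "th < 1"
proof -
  have "real N * (real N - 1) \<ge> 1 * 1" using N3 by (intro mult_mono) auto
  then show "0 \<le> th" "th < 1" by (auto simp: field_simps)
qed

lemma nn_iter:
  assumes "0 \<le> \<delta>" "\<delta> \<le> dd0 N b c r" "s \<in> states N"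
  shows "iterP (trans_prob N b c r \<delta>) (states N) t (\<lambda>s. nn N (fst s)) s
    = nn N (fst s) + \<delta> * (\<Sum>k<t. iterP (trans_prob N b c r \<delta>) (states N) k (QQ N b c r \<delta>) s)"
proof (induction t)
  case 0 then show ?case by simp
next
  case (Suc t)
  let ?P = "trans_prob N b c r \<delta>"
  have "iterP ?P (states N) (Suc t) (\<lambda>s. nn N (fst s)) s = iterP ?P (states N) t (\<lambda>s. \<Sum>s'\<in>states N. ?P s s' * nn N (fst s')) s"
    by (rule iterP_shift)
  also have "\<dots> = iterP ?P (states N) t (\<lambda>s. nn N (fst s) + \<delta> * QQ N b c r \<delta> s) s"
    by (rule iterP_cong[OF _ assms(3)]) (rule P_nn[OF N3 _ assms(1,2)])
  also have "\<dots> = iterP ?P (states N) t (\<lambda>s. nn N (fst s)) s + \<delta> * iterP ?P (states N) t (QQ N b c r \<delta>) s"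
    by (simp add: iterP_add iterP_cmult)
  finally show ?case using Suc by (simp add: algebra_simps)
qed

lemma QQ_iter_bound:
  assumes "0 \<le> \<delta>" "\<delta> \<le> dd0 N b c r" "s \<in> states N"
  shows "\<bar>iterP (trans_prob N b c r \<delta>) (states N) k (QQ N b c r \<delta>) s\<bar> \<le> CC * (th ^ k * VV N (fst s))"
proof -
  let ?P = "trans_prob N b c r \<delta>"
  have nonneg: "\<And>s s'. s \<in> states N \<Longrightarrow> s' \<in> states N \<Longrightarrow> ?P s s' \<ge> 0"
    using P_nonneg[OF N3 assms(1,2)] by blast
  have "\<bar>iterP ?P (states N) k (QQ N b c r \<delta>) s\<bar> \<le> iterP ?P (states N) k (\<lambda>s. CC * VV N (fst s)) s"
  proof (rule iterP_abs_bound[OF nonneg _ assms(3)])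
    fix s' assume "s' \<in> states N"
    show "\<bar>QQ N b c r \<delta> s'\<bar> \<le> CC * VV N (fst s')" using QQ_bound[OF N3 assms(1,2), of s'] by simp
  qed
  also have "\<dots> = CC * iterP ?P (states N) k (\<lambda>s. VV N (fst s)) s" by (rule iterP_cmult)
  also have "\<dots> \<le> CC * (th ^ k * VV N (fst s))"
  proof (rule mult_left_mono)
    show "iterP ?P (states N) k (\<lambda>s. VV N (fst s)) s \<le> th ^ k * VV N (fst s)"
    proof (rule iterP_geom[OF nonneg _ th_bounds(1) assms(3)])
      fix s' assume "s' \<in> states N"
      then show "(\<Sum>s''\<in>states N. ?P s' s'' * VV N (fst s'')) \<le> th * VV N (fst s')"
        using P_VV[OF N3 _ assms(1,2)] by simp
    qed
    show "0 \<le> CC" using KK_nonneg[OF N3] by simp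
  qed
  finally show ?thesis .
qed

lemma Mgeom_summable: "summable (\<lambda>k. CC * (th ^ k * V))"
  using th_bounds by (intro summable_mult summable_mult2 summable_geometric) auto

lemma Sm_summable:
  assumes "0 \<le> \<delta>" "\<delta> \<le> dd0 N b c r"
  shows "summable (\<lambda>k. iterP (trans_prob N b c r \<delta>) (states N) k (QQ N b c r \<delta>) xi)"
  by (rule summable_comparison_test'[OF Mgeom_summable[of "VV N (fst xi)"]])
     (use QQ_iter_bound[OF assms xi_in] N3 in simp)

lemma nn_xi: "nn N (fst xi) = 1"
proof -
  have "nn N (fst xi) = (\<Sum>i<N. if i = 0 then 1 else 0)" unfolding nn_def xi_def
    by (rule sum.cong) auto
  also have "\<dots> = 1" using N3 by simp
  finally show ?thesis .
qed

lemma rho_eq: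
  assumes "0 \<le> \<delta>" "\<delta> \<le> dd0 N b c r"
  shows "rho1 N b c r \<delta> xi = (1 + \<delta> * Sm \<delta>) / real N"
proof -
  let ?P = "trans_prob N b c r \<delta>"
  let ?A = "\<lambda>s. (of_bool (\<forall>i<N. fst s i) :: real)"
  let ?G = "\<lambda>t. iterP ?P (states N) t (\<lambda>s. nn N (fst s)) xi"
  let ?a = "\<lambda>t. all_coop_prob N b c r \<delta> t xi"
  have xs: "xi \<in> states N" using xi_in N3 by simp
  have nonneg: "\<And>s s'. s \<in> states N \<Longrightarrow> s' \<in> states N \<Longrightarrow> ?P s s' \<ge> 0"
    using P_nonneg[OF N3 assms(1,2)] by blast
  have G: "?G t = 1 + \<delta> * (\<Sum>k<t. iterP ?P (states N) k (QQ N b c r \<delta>) xi)" for t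
    using nn_iter[OF assms xs, of t] nn_xi by simp
  have GL: "(\<lambda>t. ?G t / real N) \<longlonglongrightarrow> (1 + \<delta> * Sm \<delta>) / real N"
    unfolding G using N3 by (intro tendsto_intros summable_LIMSEQ Sm_summable[OF assms]) auto
  have eb: "\<bar>?G t / real N - ?a t\<bar> \<le> th ^ t * VV N (fst xi)" for t
  proof -
    have "?G t / real N - ?a t = iterP ?P (states N) t (\<lambda>s. (1 / real N) * nn N (fst s) - ?A s) xi"
      unfolding all_coop_iter iterP_diff iterP_cmult by simp
    also have "\<bar>\<dots>\<bar> \<le> iterP ?P (states N) t (\<lambda>s. VV N (fst s)) xi"
    proof (rule iterP_abs_bound[OF nonneg _ xs])
      fix s assume "s \<in> states N"
      show "\<bar>1 / real N * nn N (fst s) - ?A s\<bar> \<le> VV N (fst s)"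
        using h_bound[of N "fst s"] N3 by simp
    qed
    also have "\<dots> \<le> th ^ t * VV N (fst xi)"
    proof (rule iterP_geom[OF nonneg _ th_bounds(1) xs])
      fix s' assume "s' \<in> states N"
      then show "(\<Sum>s''\<in>states N. ?P s' s'' * VV N (fst s'')) \<le> th * VV N (fst s')"
        using P_VV[OF N3 _ assms(1,2)] by simp
    qed
    finally show ?thesis .
  qed
  have e0: "(\<lambda>t. ?G t / real N - ?a t) \<longlonglongrightarrow> 0"
  proof (rule Lim_null_comparison)
    show "\<forall>\<^sub>F t in sequentially. norm (?G t / real N - ?a t) \<le> th ^ t * VV N (fst xi)"
      using eb by simp
    show "(\<lambda>t. th ^ t * VV N (fst xi)) \<longlonglongrightarrow> 0"
      using th_bounds by (intro tendsto_mult_left_zero LIMSEQ_power_zero) auto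
  qed
  have "(\<lambda>t. ?G t / real N - (?G t / real N - ?a t)) \<longlonglongrightarrow> (1 + \<delta> * Sm \<delta>) / real N - 0"
    by (intro tendsto_diff GL e0)
  then have "?a \<longlonglongrightarrow> (1 + \<delta> * Sm \<delta>) / real N" by simp
  then show ?thesis unfolding rho1_def by (rule limI)
qed

lemma ev_small: "eventually (\<lambda>y. 0 \<le> y \<and> y \<le> dd0 N b c r \<and> y \<noteq> 0) (at_right (0::real))"
proof -
  have "eventually (\<lambda>y. y \<in> {0<..<dd0 N b c r}) (at_right (0::real))"
    by (rule eventually_at_right_real) (rule dd0_pos[OF N3])
  then show ?thesis by eventually_elim auto
qed

lemma Sm_tendsto: "((\<lambda>y. Sm y) \<longlongrightarrow> Sm 0) (at_right 0)"
proof -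
  let ?F = "at_right (0::real)"
  have tp: "((\<lambda>d. trans_prob N b c r d s s') \<longlongrightarrow> trans_prob N b c r 0 s s') ?F" for s s'
    using trans_cont[OF N3, where b=b and c=c and r=r and s=s and s'=s'] unfolding isCont_def by (rule tendsto_mono[OF at_le, rotated]) simp
  have tq: "((\<lambda>d. QQ N b c r d s) \<longlongrightarrow> QQ N b c r 0 s) ?F" for s
    using QQ_cont[OF N3, where b=b and c=c and r=r and s=s] unfolding isCont_def by (rule tendsto_mono[OF at_le, rotated]) simp
  have lim: "((\<lambda>y. iterP (trans_prob N b c r y) (states N) k (QQ N b c r y) xi) \<longlongrightarrow> iterP (trans_prob N b c r 0) (states N) k (QQ N b c r 0) xi) ?F" for k
    by (rule iterP_tendsto[OF tp tq])
  have bound: "eventually (\<lambda>(k, y). norm (iterP (trans_prob N b c r y) (states N) k (QQ N b c r y) xi) \<le> CC * (th ^ k * VV N (fst xi))) (at_top \<times>\<^sub>F ?F)"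
    unfolding eventually_prod_filter
  proof (intro exI conjI allI impI)
    show "eventually (\<lambda>_. True) at_top" by simp
    show "eventually (\<lambda>y. 0 \<le> y \<and> y \<le> dd0 N b c r \<and> y \<noteq> 0) ?F" by (rule ev_small)
    fix k :: nat and y :: real assume "True" "0 \<le> y \<and> y \<le> dd0 N b c r \<and> y \<noteq> 0"
    then show "(\<lambda>(k, y). norm (iterP (trans_prob N b c r y) (states N) k (QQ N b c r y) xi) \<le> CC * (th ^ k * VV N (fst xi))) (k, y)"
      using QQ_iter_bound[of y xi k] xi_in N3 by simp
  qed
  have "eventually (\<lambda>n. summable (\<lambda>k. norm (iterP (trans_prob N b c r n) (states N) k (QQ N b c r n) xi))) ?F \<and>
        summable (\<lambda>n. norm (iterP (trans_prob N b c r 0) (states N) n (QQ N b c r 0) xi)) \<and>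
        ((\<lambda>n. Sm n) \<longlongrightarrow> Sm 0) ?F"
    by (rule tannerys_theorem[OF lim bound Mgeom_summable]) simp
  then show ?thesis by simp
qed

end



lemma gen: "y \<noteq> 0 \<Longrightarrow> 1 - x / y = (y - x) / (y::real)"
  by (simp add: field_simps)

lemma final_arith:
  fixes n b c r :: real
  assumes n: "n \<ge> 3" and c: "c > 0"
  shows "((n - 2) / (n * (n - 1) * (n - 1)) * ((- c - b / (n - 1)) * ((n - 1) / (1 - (1 - 2 / (n * (n - 1)))))
            + (r - 1) * ((n - 1) / (1 - ((n - 2) / (n - 1))^2)))) / n > 0
     \<longleftrightarrow> b / c < - (n - 1) + (r - 1) / c * (2 * (n - 1)^2 / (n * (2 * n - 3)))"
proof -
  have a: "n \<noteq> 0" "n - 1 \<noteq> 0" "2 * n - 3 \<noteq> 0" "n - 1 > 0" "n > 0" "2 * n - 3 > 0" using n by auto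
  have e1: "(n - 1) / (1 - (1 - 2 / (n * (n - 1)))) = n * (n - 1)^2 / 2"
    using a by (simp add: field_simps power2_eq_square)
  have q: "(n - 1)^2 \<noteq> 0" using a by simp
  have "1 - ((n - 2) / (n - 1))^2 = ((n - 1)^2 - (n - 2)^2) / (n - 1)^2"
    unfolding power_divide by (rule gen[OF q])
  also have "(n - 1)^2 - (n - 2)^2 = 2 * n - 3" by (simp add: power2_eq_square algebra_simps)
  finally have "1 - ((n - 2) / (n - 1))^2 = (2 * n - 3) / (n - 1)^2" .
  then have e2: "(n - 1) / (1 - ((n - 2) / (n - 1))^2) = (n - 1)^3 / (2 * n - 3)"
    unfolding divide_divide_eq_right by (simp add: power2_eq_square power3_eq_cube)
  define R where "R = - (n - 1) + (r - 1) / c * (2 * (n - 1)^2 / (n * (2 * n - 3)))"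
  define pos where "pos = (n - 2) / (n * n) * (n * c / (2 * (n - 1)))"
  have pos: "pos > 0" unfolding pos_def using a c n by (intro mult_pos_pos divide_pos_pos) auto
  have s1: "((n - 2) / (n * (n - 1) * (n - 1)) * (X * (n * (n - 1)^2 / 2) + Y * ((n - 1)^3 / (2 * n - 3)))) / n
      = (n - 2) / (n * n) * (X * n / 2 + Y * (n - 1) / (2 * n - 3))" for X Y
  proof -
    have f: "X * (n * (n - 1)^2 / 2) + Y * ((n - 1)^3 / (2 * n - 3)) = (n - 1)^2 * (X * n / 2 + Y * (n - 1) / (2 * n - 3))"
      using a by (simp add: field_simps power2_eq_square power3_eq_cube)
    have g0: "A \<noteq> 0 \<Longrightarrow> k / (n * A * A) * ((A * A) * Z) / n = k / (n * n) * Z" for Z A k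
      using a by (simp add: field_simps)
    have g: "(n - 2) / (n * (n - 1) * (n - 1)) * ((n - 1)^2 * Z) / n = (n - 2) / (n * n) * Z" for Z
      unfolding power2_eq_square by (rule g0) (use a in simp)
    show ?thesis unfolding f g ..
  qed
  have s2: "(- c - b / (n - 1)) * n / 2 + (r - 1) * (n - 1) / (2 * n - 3) = (n * c / (2 * (n - 1))) * (R - b / c)"
  proof -
    have s0: "m \<noteq> 0 \<Longrightarrow> q \<noteq> 0 \<Longrightarrow> (- c - b / m) * n / 2 + (r - 1) * m / q = (n * c / (2 * m)) * ((- m + (r - 1) / c * (2 * m^2 / (n * q))) - b / c)" for m q
      using a c by (simp add: field_simps power2_eq_square)
    show ?thesis unfolding R_def by (rule s0) (use a in auto)
  qed
  have "((n - 2) / (n * (n - 1) * (n - 1)) * ((- c - b / (n - 1)) * ((n - 1) / (1 - (1 - 2 / (n * (n - 1)))))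
            + (r - 1) * ((n - 1) / (1 - ((n - 2) / (n - 1))^2)))) / n = pos * (R - b / c)"
    unfolding e1 e2 s1 s2 pos_def by simp
  then show ?thesis using pos unfolding R_def[symmetric] by (simp add: zero_less_mult_iff)
qed

context
  fixes N :: nat and b c r :: real
  assumes N3: "N \<ge> 3"
begin

lemma VV_xi: "VV N (fst xi) = real N - 1"
  unfolding VV_def nn_xi[OF N3] by simp

lemma WW_xi: "WW N xi = real N - 1"
proof -
  have "(\<Sum>l<N. (of_bool (fst xi l) * of_bool (snd xi l) :: real)) = (\<Sum>l<N. if l = 0 then 1 else 0)"
    unfolding xi_def by (rule sum.cong) auto
  also have "\<dots> = 1" using N3 by simp
  finally show ?thesis unfolding WW_def nn_xi[OF N3] using nn_xi[OF N3]
    by (simp add: xi_def)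
qed

lemma iter0:
  assumes s: "s \<in> states N"
  shows "iterP (trans_prob N b c r 0) (states N) k (QQ N b c r 0) s
    = (real N - 2) / (real N * (real N - 1) * (real N - 1)) *
      ((- c - b / (real N - 1)) * ((1 - 2 / (real N * (real N - 1))) ^ k * VV N (fst s))
       + (r - 1) * ((((real N - 2) / (real N - 1))^2) ^ k * WW N s))"
proof -
  let ?P = "trans_prob N b c r 0"
  let ?K = "(real N - 2) / (real N * (real N - 1) * (real N - 1))"
  let ?A = "- c - b / (real N - 1)"
  have "iterP ?P (states N) k (QQ N b c r 0) s
      = iterP ?P (states N) k (\<lambda>s. ?K * (?A * VV N (fst s) + (r - 1) * WW N s)) s"
    by (rule iterP_cong[OF _ s]) (simp add: QQ0[OF N3] aa_eq[OF N3])
  also have "\<dots> = ?K * iterP ?P (states N) k (\<lambda>s. ?A * VV N (fst s) + (r - 1) * WW N s) s"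
    by (rule iterP_cmult)
  also have "iterP ?P (states N) k (\<lambda>s. ?A * VV N (fst s) + (r - 1) * WW N s) s
      = iterP ?P (states N) k (\<lambda>s. ?A * VV N (fst s)) s + iterP ?P (states N) k (\<lambda>s. (r - 1) * WW N s) s"
    by (rule iterP_add)
  also have "iterP ?P (states N) k (\<lambda>s. ?A * VV N (fst s)) s = ?A * iterP ?P (states N) k (\<lambda>s. VV N (fst s)) s"
    by (rule iterP_cmult)
  also have "iterP ?P (states N) k (\<lambda>s. (r - 1) * WW N s) s = (r - 1) * iterP ?P (states N) k (WW N) s"
    by (rule iterP_cmult)
  also have "iterP ?P (states N) k (\<lambda>s. VV N (fst s)) s = (1 - 2 / (real N * (real N - 1))) ^ k * VV N (fst s)"
    by (rule iterP_eigen[OF _ s]) (rule P0_VV[OF N3])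
  also have "iterP ?P (states N) k (WW N) s = (((real N - 2) / (real N - 1))^2) ^ k * WW N s"
    by (rule iterP_eigen[OF _ s]) (rule P0_WW[OF N3])
  finally show ?thesis .
qed

lemma Sm0:
  "(\<Sum>k. iterP (trans_prob N b c r 0) (states N) k (QQ N b c r 0) xi)
    = (real N - 2) / (real N * (real N - 1) * (real N - 1)) *
      ((- c - b / (real N - 1)) * ((real N - 1) / (1 - (1 - 2 / (real N * (real N - 1)))))
       + (r - 1) * ((real N - 1) / (1 - ((real N - 2) / (real N - 1))^2)))"
proof -
  let ?K = "(real N - 2) / (real N * (real N - 1) * (real N - 1))"
  let ?A = "- c - b / (real N - 1)"
  let ?mu = "1 - 2 / (real N * (real N - 1))"
  let ?nu = "((real N - 2) / (real N - 1))^2"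
  have N3r: "real N \<ge> 3" using N3 by simp
  have p: "real N * (real N - 1) \<ge> 3 * 2" using N3r by (intro mult_mono) auto
  have mu: "norm ?mu < 1"
  proof -
    have "2 / (real N * (real N - 1)) \<le> 2 / 6" using p by (intro divide_left_mono) auto
    moreover have "2 / (real N * (real N - 1)) > 0" using p by simp
    ultimately show ?thesis by simp
  qed
  have nu: "norm ?nu < 1"
  proof -
    have "0 \<le> (real N - 2) / (real N - 1)" "(real N - 2) / (real N - 1) < 1" using N3r by auto
    then have "?nu < 1" by (simp add: power_less_one_iff)
    then show ?thesis by simp
  qed
  have "(\<lambda>k. ?K * (?A * (?mu ^ k * (real N - 1)) + (r - 1) * (?nu ^ k * (real N - 1))))
     sums (?K * (?A * (1 / (1 - ?mu) * (real N - 1)) + (r - 1) * (1 / (1 - ?nu) * (real N - 1))))"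
    by (intro sums_mult sums_add sums_mult2 geometric_sums mu nu)
  moreover have "(\<lambda>k. iterP (trans_prob N b c r 0) (states N) k (QQ N b c r 0) xi)
     = (\<lambda>k. ?K * (?A * (?mu ^ k * (real N - 1)) + (r - 1) * (?nu ^ k * (real N - 1))))"
    using iter0[OF xi_in, of k] N3 by (simp add: iter0[OF xi_in] VV_xi WW_xi fun_eq_iff)
  ultimately have "(\<lambda>k. iterP (trans_prob N b c r 0) (states N) k (QQ N b c r 0) xi)
     sums (?K * (?A * (1 / (1 - ?mu) * (real N - 1)) + (r - 1) * (1 / (1 - ?nu) * (real N - 1))))" by simp
  then show ?thesis by (simp add: sums_unique[symmetric])
qed

end

theorem mainTheorem4:
  fixes N :: nat and b c r :: real
  assumes "N \<ge> 3" and "c > 0" and "r \<ge> 0"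
  shows "\<exists>D. ((\<lambda>\<delta>. rho1 N b c r \<delta> xi) has_real_derivative D) (at 0 within {0..})
           \<and> (D > 0 \<longleftrightarrow>
               b / c < - (real N - 1)
                 + (r - 1) / c * (2 * (real N - 1)^2 / (real N * (2 * real N - 3))))"
proof -
  note N3 = assms(1)
  let ?S = "\<lambda>y. (\<Sum>k. iterP (trans_prob N b c r y) (states N) k (QQ N b c r y) xi)"
  define D where "D = ?S 0 / real N"
  have deriv: "((\<lambda>\<delta>. rho1 N b c r \<delta> xi) has_real_derivative D) (at 0 within {0..})"
    unfolding has_field_derivative_iff at_within_Ici_at_right D_def
  proof (rule Lim_transform_eventually)
    show "((\<lambda>y. ?S y / real N) \<longlongrightarrow> ?S 0 / real N) (at_right 0)"
      by (intro tendsto_divide Sm_tendsto[OF N3] tendsto_const) (use N3 in simp)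
    show "\<forall>\<^sub>F y in at_right 0. ?S y / real N = (rho1 N b c r y xi - rho1 N b c r 0 xi) / (y - 0)"
      using ev_small[OF N3, of b c r]
    proof eventually_elim
      case (elim y)
      have r0: "rho1 N b c r 0 xi = 1 / real N"
        using rho_eq[OF N3, of 0 b c r] dd0_pos[OF N3, of b c r] by simp
      have ry: "rho1 N b c r y xi = (1 + y * ?S y) / real N"
        by (rule rho_eq[OF N3]) (use elim in auto)
      have "real N \<noteq> 0" using N3 by simp
      then show ?case unfolding r0 ry using elim by (simp add: field_simps)
    qed
  qed
  have "D > 0 \<longleftrightarrow> b / c < - (real N - 1) + (r - 1) / c * (2 * (real N - 1)^2 / (real N * (2 * real N - 3)))"
    unfolding D_def Sm0[OF N3] by (rule final_arith) (use N3 assms(2) in auto)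
  then show ?thesis using deriv by blast
qed


end
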